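(* Let $\Omega$ be a bounded domain in $\mathbb{C}^n$ and $f$ a smooth function on $\Omega$. Then for every $\varepsilon>0$ there are smooth non-negative functions $f^+$ and $f^-$ on $\Omega$ such that $f=f^+-f^-$, $\|f^\pm\|_{L^1(\Omega)}\le\|f\|_{L^1(\Omega)}+\varepsilon$ and $\|f^\pm\|_{*,\Omega}\le\|f\|_{*,\Omega}+\varepsilon$. In particular, if $\mu$ and $\mu'$ are positive measures with compact supports in $\Omega$ such that $\mu\le\mu'$ and $\mu'$ is $W^*(\Omega)$-H\"older continuous, then $\mu$ is also $W^*(\Omega)$-H\"older continuous.
   Context: $d^c=\frac{1}{2i\pi}(\partial-\bar\partial)$, $\omega$ the standard K\"ahler form on $\mathbb{C}^n$. $W^*(\Omega)$ is the space of real $f\in W^{1,2}(\Omega)$ with $df\wedge d^cf\le T$ for some closed positive $(1,1)$-current $T$ of finite mass on $\Omega$, with norm $\|f\|_{*,\Omega}=\|f\|_{L^1(\Omega)}+\min\{(\int_\Omega T\wedge\omega^{n-1})^{1/2}\}$ (taken to be $+\infty$ if $f\notin W^*(\Omega)$). A finite positive measure $\mu$ with compact support in $\Omega$ is $W^*(\Omega)$-H\"older continuous if there are $c,\alpha>0$ with $|\mu(f)|\le c\|f\|_{L^1(\Omega)}^\alpha$ for every smooth $f$ on $\Omega$ with $\|f\|_{*,\Omega}\le1$. *)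

theory Defs
  imports "HOL-Analysis.Analysis"
begin

fun Ck_on :: "nat \<Rightarrow> 'a::real_normed_vector set \<Rightarrow> ('a \<Rightarrow> 'b::real_normed_vector) \<Rightarrow> bool" where
  "Ck_on 0 S f = continuous_on S f"
| "Ck_on (Suc k) S f =
     ((\<forall>x\<in>S. f differentiable (at x)) \<and>
      (\<forall>v. Ck_on k S (\<lambda>x. frechet_derivative f (at x) v)))"

definition smooth_on :: "'a::real_normed_vector set \<Rightarrow> ('a \<Rightarrow> 'b::real_normed_vector) \<Rightarrow> bool" where
  "smooth_on S f \<longleftrightarrow> (\<forall>k. Ck_on k S f)"

definition pd :: "('a::real_normed_vector \<Rightarrow> real) \<Rightarrow> 'a \<Rightarrow> 'a \<Rightarrow> real" where
  "pd f v x = frechet_derivative f (at x) v"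

definition test_fn :: "(complex^'n) set \<Rightarrow> (complex^'n \<Rightarrow> real) \<Rightarrow> bool" where
  "test_fn \<Omega> \<phi> \<longleftrightarrow> smooth_on UNIV \<phi> \<and>
     compact (closure {x. \<phi> x \<noteq> 0}) \<and> closure {x. \<phi> x \<noteq> 0} \<subseteq> \<Omega>"

definition ex :: "'n \<Rightarrow> complex^'n" where "ex j = axis j 1"
definition ey :: "'n \<Rightarrow> complex^'n" where "ey j = axis j \<i>"

definition L2_on :: "(complex^'n) set \<Rightarrow> (complex^'n \<Rightarrow> real) \<Rightarrow> bool" where
  "L2_on \<Omega> g \<longleftrightarrow> set_borel_measurable lborel \<Omega> g \<and> set_integrable lborel \<Omega> (\<lambda>x. (g x)\<^sup>2)"

definition weak_deriv :: "(complex^'n) set \<Rightarrow> (complex^'n \<Rightarrow> real) \<Rightarrow> complex^'n \<Rightarrow> (complex^'n \<Rightarrow> real) \<Rightarrow> bool" where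
  "weak_deriv \<Omega> f v g \<longleftrightarrow> (\<forall>\<phi>. test_fn \<Omega> \<phi> \<longrightarrow>
     (LINT x:\<Omega>|lborel. f x * pd \<phi> v x) = - (LINT x:\<Omega>|lborel. g x * \<phi> x))"

definition W12_grad :: "(complex^'n) set \<Rightarrow> (complex^'n \<Rightarrow> real) \<Rightarrow> (complex^'n \<Rightarrow> complex^'n \<Rightarrow> real) \<Rightarrow> bool" where
  "W12_grad \<Omega> f G \<longleftrightarrow> L2_on \<Omega> f \<and> (\<forall>v\<in>Basis. L2_on \<Omega> (G v) \<and> weak_deriv \<Omega> f v (G v))"

definition W12 :: "(complex^'n) set \<Rightarrow> (complex^'n \<Rightarrow> real) \<Rightarrow> bool" where
  "W12 \<Omega> f \<longleftrightarrow> (\<exists>G. W12_grad \<Omega> f G)"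

text \<open>A (1,1)-current T = i \<Sum> T_jk dz_j \<and> dzbar_k on \<Omega> is given by its distribution
  coefficients T j k, acting on real test functions (extended complex-linearly).\<close>
type_synonym 'n current11 = "'n \<Rightarrow> 'n \<Rightarrow> (complex^'n \<Rightarrow> real) \<Rightarrow> complex"

text \<open>Action of T j k on the complex test functions d_l phi and dbar_l phi.\<close>
definition T_dz :: "'n current11 \<Rightarrow> 'n \<Rightarrow> 'n \<Rightarrow> 'n \<Rightarrow> (complex^'n \<Rightarrow> real) \<Rightarrow> complex" where
  "T_dz T j k l \<phi> = (T j k (pd \<phi> (ex l)) - \<i> * T j k (pd \<phi> (ey l))) / 2"
definition T_dzbar :: "'n current11 \<Rightarrow> 'n \<Rightarrow> 'n \<Rightarrow> 'n \<Rightarrow> (complex^'n \<Rightarrow> real) \<Rightarrow> complex" where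
  "T_dzbar T j k l \<phi> = (T j k (pd \<phi> (ex l)) + \<i> * T j k (pd \<phi> (ey l))) / 2"

definition is_current11 :: "(complex^'n) set \<Rightarrow> 'n current11 \<Rightarrow> bool" where
  "is_current11 \<Omega> T \<longleftrightarrow> (\<forall>j k \<phi> \<psi> (a::real) (b::real). test_fn \<Omega> \<phi> \<longrightarrow> test_fn \<Omega> \<psi> \<longrightarrow>
     T j k (\<lambda>x. a * \<phi> x + b * \<psi> x) = of_real a * T j k \<phi> + of_real b * T j k \<psi>)"

text \<open>Positivity of i \<Sum> S_jk dz_j \<and> dzbar_k: the coefficient matrix evaluated on nonnegative
  test functions is Hermitian positive semidefinite.\<close>
definition positive11 :: "(complex^'n) set \<Rightarrow> 'n current11 \<Rightarrow> bool" where
  "positive11 \<Omega> S \<longleftrightarrow> (\<forall>\<phi> (\<xi>::'n \<Rightarrow> complex). test_fn \<Omega> \<phi> \<longrightarrow> (\<forall>x. 0 \<le> \<phi> x) \<longrightarrow>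
     (let q = (\<Sum>j\<in>UNIV. \<Sum>k\<in>UNIV. S j k \<phi> * \<xi> j * cnj (\<xi> k)) in Im q = 0 \<and> 0 \<le> Re q))"

text \<open>Closedness dT = 0 (i.e. \<partial>T = 0 and \<partial>bar T = 0) in the sense of distributions.\<close>
definition closed11 :: "(complex^'n) set \<Rightarrow> 'n current11 \<Rightarrow> bool" where
  "closed11 \<Omega> T \<longleftrightarrow> (\<forall>j k l \<phi>. test_fn \<Omega> \<phi> \<longrightarrow>
     T_dz T j k l \<phi> = T_dz T l k j \<phi> \<and> T_dzbar T j k l \<phi> = T_dzbar T j l k \<phi>)"

definition closed_positive11 :: "(complex^'n) set \<Rightarrow> 'n current11 \<Rightarrow> bool" where
  "closed_positive11 \<Omega> T \<longleftrightarrow> is_current11 \<Omega> T \<and> positive11 \<Omega> T \<and> closed11 \<Omega> T"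

text \<open>Mass \<integral>_\<Omega> T \<and> \<omega>^{n-1}, with \<omega> = dd^c|z|^2 = (i/\<pi>) \<Sum> dz_j \<and> dzbar_j:
  T \<and> \<omega>^{n-1} = 2^n (n-1)! / \<pi>^{n-1} (\<Sum>_j T_jj) dLeb.  The measure of \<Omega> is
  computed as a supremum over test functions 0 \<le> \<phi> \<le> 1.\<close>
definition mass11 :: "(complex^'n) set \<Rightarrow> 'n current11 \<Rightarrow> ennreal" where
  "mass11 \<Omega> T = ennreal (2 ^ CARD('n) * fact (CARD('n) - 1) / pi ^ (CARD('n) - 1)) *
     (SUP \<phi>\<in>{\<phi>. test_fn \<Omega> \<phi> \<and> (\<forall>x. 0 \<le> \<phi> x \<and> \<phi> x \<le> 1)}. ennreal (\<Sum>j\<in>UNIV. Re (T j j \<phi>)))"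

text \<open>df \<and> d^c f = (i/\<pi>) \<partial>f \<and> \<partial>bar f, with coefficients (1/\<pi>) \<partial>_j f conj(\<partial>_k f).\<close>
definition dz_f :: "(complex^'n \<Rightarrow> complex^'n \<Rightarrow> real) \<Rightarrow> 'n \<Rightarrow> complex^'n \<Rightarrow> complex" where
  "dz_f G j x = (complex_of_real (G (ex j) x) - \<i> * complex_of_real (G (ey j) x)) / 2"

definition ddc_current :: "(complex^'n) set \<Rightarrow> (complex^'n \<Rightarrow> complex^'n \<Rightarrow> real) \<Rightarrow> 'n current11" where
  "ddc_current \<Omega> G j k \<phi> = (LINT x:\<Omega>|lborel. complex_of_real (\<phi> x) * dz_f G j x * cnj (dz_f G k x)) / of_real pi"

definition dominated_by :: "(complex^'n) set \<Rightarrow> (complex^'n \<Rightarrow> real) \<Rightarrow> 'n current11 \<Rightarrow> bool" where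
  "dominated_by \<Omega> f T \<longleftrightarrow> (\<exists>G. W12_grad \<Omega> f G \<and>
      positive11 \<Omega> (\<lambda>j k \<phi>. T j k \<phi> - ddc_current \<Omega> G j k \<phi>))"

definition admissible_T :: "(complex^'n) set \<Rightarrow> (complex^'n \<Rightarrow> real) \<Rightarrow> 'n current11 set" where
  "admissible_T \<Omega> f = {T. closed_positive11 \<Omega> T \<and> mass11 \<Omega> T < \<infinity> \<and> dominated_by \<Omega> f T}"

definition Wstar :: "(complex^'n) set \<Rightarrow> (complex^'n \<Rightarrow> real) \<Rightarrow> bool" where
  "Wstar \<Omega> f \<longleftrightarrow> W12 \<Omega> f \<and> admissible_T \<Omega> f \<noteq> {}"

definition L1norm :: "(complex^'n) set \<Rightarrow> (complex^'n \<Rightarrow> real) \<Rightarrow> ennreal" where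
  "L1norm \<Omega> f = (\<integral>\<^sup>+ x\<in>\<Omega>. ennreal \<bar>f x\<bar> \<partial>lborel)"

definition star_norm :: "(complex^'n) set \<Rightarrow> (complex^'n \<Rightarrow> real) \<Rightarrow> ennreal" where
  "star_norm \<Omega> f = (if Wstar \<Omega> f then
      L1norm \<Omega> f + ennreal (sqrt (enn2real (INF T\<in>admissible_T \<Omega> f. mass11 \<Omega> T)))
    else \<infinity>)"

definition Wstar_Holder :: "(complex^'n) set \<Rightarrow> (complex^'n) measure \<Rightarrow> bool" where
  "Wstar_Holder \<Omega> \<mu> \<longleftrightarrow> (\<exists>c>0. \<exists>\<alpha>>0. \<forall>f. smooth_on \<Omega> f \<and> star_norm \<Omega> f \<le> 1 \<longrightarrow>
      \<bar>LINT x:\<Omega>|\<mu>. f x\<bar> \<le> c * enn2real (L1norm \<Omega> f) powr \<alpha>)"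

definition compact_support_in :: "(complex^'n) set \<Rightarrow> (complex^'n) measure \<Rightarrow> bool" where
  "compact_support_in \<Omega> \<mu> \<longleftrightarrow> (\<exists>K. compact K \<and> K \<subseteq> \<Omega> \<and> emeasure \<mu> (space \<mu> - K) = 0)"

end

theory Submission
  imports Defs
begin

lemma Ck_mono: "Ck_on (Suc k) S f \<Longrightarrow> Ck_on k S f"
proof (induction k arbitrary: f)
  case 0
  then show ?case
    by (auto intro!: continuous_at_imp_continuous_on differentiable_imp_continuous_within)
next
  case (Suc k)
  then show ?case by auto
qed

lemma Ck_mono_le: "k \<le> m \<Longrightarrow> Ck_on m S f \<Longrightarrow> Ck_on k S f"
proof (induction m rule: dec_induct)
  case base then show ?case by simp
next
  case (step n) then show ?case using Ck_mono by blast
qed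
  
lemma Ck_subset: "T \<subseteq> S \<Longrightarrow> Ck_on k S f \<Longrightarrow> Ck_on k T f"
  by (induction k arbitrary: f) (auto intro: continuous_on_subset)

lemma fd_cong:
  assumes "open S" "x \<in> S" "\<And>y. y \<in> S \<Longrightarrow> f y = g y" "f differentiable (at x)"
  shows "frechet_derivative f (at x) = frechet_derivative g (at x)"
proof -
  have "(f has_derivative frechet_derivative f (at x)) (at x)"
    using assms(4) frechet_derivative_works by blast
  then have "(g has_derivative frechet_derivative f (at x)) (at x)"
    using has_derivative_transform_within_open assms by blast
  then show ?thesis by (rule frechet_derivative_at)
qed

lemma diff_cong:
  assumes "open S" "x \<in> S" "\<And>y. y \<in> S \<Longrightarrow> f y = g y" "f differentiable (at x)"
  shows "g differentiable (at x)"
  using assms has_derivative_transform_within_open unfolding differentiable_def by blast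

lemma Ck_cong:
  assumes "open S" "\<And>x. x \<in> S \<Longrightarrow> f x = g x"
  shows "Ck_on k S f = Ck_on k S g"
  using assms(2)
proof (induction k arbitrary: f g)
  case 0
  then show ?case using continuous_on_cong by auto
next
  case (Suc k)
  have d: "(\<forall>x\<in>S. f differentiable (at x)) = (\<forall>x\<in>S. g differentiable (at x))"
    using diff_cong[OF assms(1)] Suc.prems by metis
  show ?case
  proof (cases "\<forall>x\<in>S. f differentiable (at x)")
    case True
    have "\<And>v. Ck_on k S (\<lambda>x. frechet_derivative f (at x) v) = Ck_on k S (\<lambda>x. frechet_derivative g (at x) v)"
      by (rule Suc.IH) (simp add: fd_cong[OF assms(1) _ Suc.prems] True)
    then show ?thesis using d by simp
  next
    case False
    then show ?thesis using d by (metis Ck_on.simps(2))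
  qed
qed

lemma Ck_const: "Ck_on k S (\<lambda>x. c)"
proof (induction k arbitrary: c)
  case 0 then show ?case by simp
next
  case (Suc k)
  have "frechet_derivative (\<lambda>x. c) (at x) = (\<lambda>v. 0)" for x
    by (metis frechet_derivative_at has_derivative_const)
  then show ?case using Suc by simp
qed

lemma Ck_SucI:
  assumes "open S" "\<And>x. x \<in> S \<Longrightarrow> (f has_derivative f' x) (at x)"
    "\<And>v. Ck_on k S (\<lambda>x. f' x v)"
  shows "Ck_on (Suc k) S f"
proof -
  have "Ck_on k S (\<lambda>x. frechet_derivative f (at x) v)" for v
    using Ck_cong[OF assms(1), of "(\<lambda>x. frechet_derivative f (at x) v)" "(\<lambda>x. f' x v)"]
      assms(2,3) frechet_derivative_at by metis
  moreover have "\<forall>x\<in>S. f differentiable (at x)"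
    using assms(2) unfolding differentiable_def by blast
  ultimately show ?thesis by simp
qed

lemma Ck_D: "Ck_on (Suc k) S f \<Longrightarrow> x \<in> S \<Longrightarrow> (f has_derivative frechet_derivative f (at x)) (at x)"
  by (simp add: frechet_derivative_works)

lemma Ck_add:
  fixes f g :: "'a::real_normed_vector \<Rightarrow> real"
  assumes "open S"
  shows "Ck_on k S f \<Longrightarrow> Ck_on k S g \<Longrightarrow> Ck_on k S (\<lambda>x. f x + g x)"
proof (induction k arbitrary: f g)
  case 0 then show ?case by (auto intro: continuous_intros)
next
  case (Suc k)
  show ?case
    apply (rule Ck_SucI[OF assms, where f'="\<lambda>x v. frechet_derivative f (at x) v + frechet_derivative g (at x) v"])
    using Suc by (auto intro!: derivative_eq_intros Ck_D simp: Suc.IH)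
qed

lemma Ck_mult:
  fixes f g :: "'a::real_normed_vector \<Rightarrow> real"
  assumes "open S"
  shows "Ck_on k S f \<Longrightarrow> Ck_on k S g \<Longrightarrow> Ck_on k S (\<lambda>x. f x * g x)"
proof (induction k arbitrary: f g)
  case 0 then show ?case by (auto intro: continuous_intros)
next
  case (Suc k)
  show ?case
    apply (rule Ck_SucI[OF assms, where f'="\<lambda>x v. f x * frechet_derivative g (at x) v + frechet_derivative f (at x) v * g x"])
    using Suc apply (auto intro!: derivative_eq_intros Ck_D)[1]
    using Suc.prems(1)[THEN Ck_mono] Suc.prems(2)[THEN Ck_mono] Suc.prems
    by (auto intro!: Ck_add[OF assms] Suc.IH)
qed

lemma Ck_inverse:
  fixes f :: "'a::real_normed_vector \<Rightarrow> real"
  assumes "open S"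
  shows "Ck_on k S f \<Longrightarrow> (\<forall>x\<in>S. f x \<noteq> 0) \<Longrightarrow> Ck_on k S (\<lambda>x. inverse (f x))"
proof (induction k arbitrary: f)
  case 0 then show ?case by (auto intro: continuous_intros)
next
  case (Suc k)
  let ?f' = "\<lambda>x v. (-1) * (inverse (f x) * (frechet_derivative f (at x) v * inverse (f x)))"
  have D: "((\<lambda>x. inverse (f x)) has_derivative ?f' x) (at x)" if "x \<in> S" for x
    using Suc.prems that
    by (auto intro!: derivative_eq_intros Ck_D simp: field_simps power2_eq_square)
  have i: "Ck_on k S (\<lambda>x. inverse (f x))" using Suc.IH Suc.prems Ck_mono by blast
  have C: "Ck_on k S (\<lambda>x. ?f' x v)" for v
      using Suc.prems i by (intro Ck_mult[OF assms] Ck_const) auto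
  show ?case by (rule Ck_SucI[OF assms D C])
qed

lemma Ck_sqrt:
  fixes f :: "'a::real_normed_vector \<Rightarrow> real"
  assumes "open S"
  shows "Ck_on k S f \<Longrightarrow> (\<forall>x\<in>S. f x > 0) \<Longrightarrow> Ck_on k S (\<lambda>x. sqrt (f x))"
proof (induction k arbitrary: f)
  case 0 then show ?case by (auto intro: continuous_intros)
next
  case (Suc k)
  let ?f' = "\<lambda>x v. frechet_derivative f (at x) v * (inverse (sqrt (f x)) * (1/2))"
  have D: "((\<lambda>x. sqrt (f x)) has_derivative ?f' x) (at x)" if "x \<in> S" for x
    using Suc.prems that
    by (auto intro!: derivative_eq_intros Ck_D simp: field_simps)
  have i: "Ck_on k S (\<lambda>x. sqrt (f x))" using Suc.IH Suc.prems Ck_mono by blast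
  have i2: "Ck_on k S (\<lambda>x. inverse (sqrt (f x)))"
    using Ck_inverse[OF assms i] Suc.prems(2) by (metis less_irrefl real_sqrt_eq_zero_cancel_iff)
  have C: "Ck_on k S (\<lambda>x. ?f' x v)" for v
      using Suc.prems i2 by (intro Ck_mult[OF assms] Ck_const) auto
  show ?case by (rule Ck_SucI[OF assms D C])
qed

lemma Ck_union:
  assumes "open A" "open B"
  shows "Ck_on k A f \<Longrightarrow> Ck_on k B f \<Longrightarrow> Ck_on k (A \<union> B) f"
proof (induction k arbitrary: f)
  case 0 then show ?case using continuous_on_open_Un[OF assms] by simp
next
  case (Suc k) then show ?case by auto
qed

lemma Ck_ext:
  fixes b :: "'a::real_normed_vector \<Rightarrow> real"
  assumes "open \<Omega>" "Ck_on k \<Omega> b" "Ck_on k UNIV \<phi>" "closed K" "K \<subseteq> \<Omega>" "\<And>x. x \<notin> K \<Longrightarrow> \<phi> x = 0"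
  shows "Ck_on k UNIV (\<lambda>x. if x \<in> \<Omega> then b x * \<phi> x else 0)"
proof -
  have 1: "Ck_on k \<Omega> (\<lambda>x. if x \<in> \<Omega> then b x * \<phi> x else 0)"
    using Ck_cong[OF assms(1), of "(\<lambda>x. if x \<in> \<Omega> then b x * \<phi> x else 0)" "\<lambda>x. b x * \<phi> x"]
      Ck_mult[OF assms(1) assms(2) Ck_subset[OF _ assms(3)]] by simp
  have o: "open (- K)" using assms(4) by auto
  have 2: "Ck_on k (-K) (\<lambda>x. if x \<in> \<Omega> then b x * \<phi> x else 0)"
    using Ck_cong[OF o, of "(\<lambda>x. if x \<in> \<Omega> then b x * \<phi> x else 0)" "\<lambda>x. 0"]
      Ck_const assms(6) by auto
  have "\<Omega> \<union> -K = UNIV" using assms(5) by auto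
  then show ?thesis using Ck_union[OF assms(1) o 1 2] by simp
qed

lemma fd_zero_outside:
  fixes h :: "'a::real_normed_vector \<Rightarrow> real"
  assumes "closed K" "\<And>x. x \<notin> K \<Longrightarrow> h x = 0" "x \<notin> K"
  shows "frechet_derivative h (at x) v = 0"
proof -
  have "(h has_derivative (\<lambda>_. 0)) (at x)"
    by (rule has_derivative_transform_within_open[of "\<lambda>_. 0" "\<lambda>_. 0" x UNIV "-K"])
       (use assms in auto)
  then show ?thesis using frechet_derivative_at by metis
qed

lemma cont_compact_integrable:
  fixes g :: "'a::euclidean_space \<Rightarrow> real"
  assumes "continuous_on UNIV g" "compact K" "\<And>x. x \<notin> K \<Longrightarrow> g x = 0"
  shows "integrable lborel g"
proof -
  have "integrable lborel (\<lambda>x. indicator K x *\<^sub>R g x)"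
    by (rule borel_integrable_compact[OF assms(2)]) (use assms(1) continuous_on_subset in blast)
  moreover have "(\<lambda>x. indicator K x *\<^sub>R g x) = g"
  proof
    fix x show "indicator K x *\<^sub>R g x = g x" by (cases "x \<in> K") (auto simp: assms(3))
  qed
  ultimately show ?thesis by simp
qed

lemma translate_integral:
  fixes h :: "'a::euclidean_space \<Rightarrow> real"
  assumes "h \<in> borel_measurable borel"
  shows "integral\<^sup>L lborel (\<lambda>x. h (x + c)) = integral\<^sup>L lborel h"
proof -
  have "integral\<^sup>L lborel h = integral\<^sup>L (distr lborel borel ((+) c)) h"
    by (simp add: lborel_distr_plus)
  also have "\<dots> = integral\<^sup>L lborel (\<lambda>x. h (c + x))"
    by (rule integral_distr) (auto simp: assms)
  finally show ?thesis by (simp add: add.commute)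
qed

lemma ibp_core:
  fixes h :: "'a::euclidean_space \<Rightarrow> real"
  assumes diff: "\<And>x. h differentiable (at x)"
    and cont: "continuous_on UNIV (\<lambda>x. frechet_derivative h (at x) v)"
    and K: "compact K" and z: "\<And>x. x \<notin> K \<Longrightarrow> h x = 0"
  shows "integral\<^sup>L lborel (\<lambda>x. frechet_derivative h (at x) v) = 0"
proof -
  define D where "D x = frechet_derivative h (at x) v" for x
  have Dz: "D x = 0" if "x \<notin> K" for x
    unfolding D_def by (rule fd_zero_outside[of K]) (use K compact_imp_closed z that in auto)
  have hc: "continuous_on UNIV h"
    using diff by (meson continuous_at_imp_continuous_on differentiable_imp_continuous_within)
  have hm: "h \<in> borel_measurable borel" by (rule borel_measurable_continuous_onI[OF hc])
  have Dc: "continuous_on UNIV D" using cont unfolding D_def .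
  have Dm: "D \<in> borel_measurable borel" by (rule borel_measurable_continuous_onI[OF Dc])
  obtain B where B: "\<And>x. \<bar>D x\<bar> \<le> B"
  proof -
    have "compact (D ` K)" using compact_continuous_image[OF continuous_on_subset[OF Dc] K] by auto
    then obtain B0 where "\<forall>y\<in>D ` K. norm y \<le> B0"
      using compact_imp_bounded bounded_iff by metis
    then have "\<bar>D x\<bar> \<le> max B0 0" for x using Dz by (cases "x \<in> K") auto
    then show ?thesis using that by blast
  qed
  define K' where "K' = (\<lambda>p. fst p - snd p *\<^sub>R v) ` (K \<times> {0..1::real})"
  have K'c: "compact K'" unfolding K'_def
    by (rule compact_continuous_image) (auto intro!: continuous_intros compact_Times K)
  define t where "t m = inverse (real (Suc m))" for m
  have tpos: "0 < t m" "t m \<le> 1" for m by (auto simp: t_def field_simps)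
  define g where "g m x = (h (x + t m *\<^sub>R v) - h x) / t m" for m x
  have hi: "integrable lborel h" by (rule cont_compact_integrable[OF hc K z])
  have hti: "integrable lborel (\<lambda>x. h (x + c))" for c
  proof -
    have "integrable (distr lborel borel ((+) c)) h" using hi by (simp add: lborel_distr_plus)
    then have "integrable lborel (\<lambda>x. h (c + x))"
      by (subst (asm) integrable_distr_eq) (auto simp: hm)
    then show ?thesis by (simp add: add.commute)
  qed
  have gi0: "integral\<^sup>L lborel (g m) = 0" for m
  proof -
    have "integral\<^sup>L lborel (g m) = (integral\<^sup>L lborel (\<lambda>x. h (x + t m *\<^sub>R v)) - integral\<^sup>L lborel h) / t m"
      unfolding g_def by (simp add: hi hti)
    also have "\<dots> = 0" by (simp add: translate_integral[OF hm])
    finally show ?thesis .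
  qed
  have line: "((\<lambda>s. h (x + s *\<^sub>R v)) has_real_derivative D (x + s *\<^sub>R v)) (at s)" for x s
  proof -
    have hd: "(h has_derivative frechet_derivative h (at (x + s *\<^sub>R v))) (at (x + s *\<^sub>R v))"
      using diff frechet_derivative_works by blast
    have ld: "((\<lambda>s. x + s *\<^sub>R v) has_derivative (\<lambda>s. s *\<^sub>R v)) (at s)"
      by (auto intro!: derivative_eq_intros)
    have "((\<lambda>s. h (x + s *\<^sub>R v)) has_derivative (\<lambda>r. frechet_derivative h (at (x + s *\<^sub>R v)) (r *\<^sub>R v))) (at s)"
      using has_derivative_compose[OF ld hd] .
    moreover have "(\<lambda>r. frechet_derivative h (at (x + s *\<^sub>R v)) (r *\<^sub>R v)) = (*) (D (x + s *\<^sub>R v))"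
    proof
      fix r
      have "linear (frechet_derivative h (at (x + s *\<^sub>R v)))"
        using hd has_derivative_linear by blast
      then show "frechet_derivative h (at (x + s *\<^sub>R v)) (r *\<^sub>R v) = D (x + s *\<^sub>R v) * r"
        unfolding D_def by (simp add: linear_scale)
    qed
    ultimately show ?thesis by (simp add: has_field_derivative_def)
  qed
  have conv: "(\<lambda>m. g m x) \<longlonglongrightarrow> D x" for x
  proof -
    have "((\<lambda>s. h (x + s *\<^sub>R v)) has_real_derivative D x) (at 0)"
      using line[of x 0] by simp
    then have L: "((\<lambda>s. (h (x + s *\<^sub>R v) - h x) / s) \<longlongrightarrow> D x) (at 0)"
      by (simp add: has_field_derivative_iff)
    have tl: "filterlim t (at 0) sequentially"
      by (rule filterlim_atI) (use LIMSEQ_inverse_real_of_nat tpos in \<open>auto simp: t_def[abs_def]\<close>)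
    show ?thesis using filterlim_compose[OF L tl] unfolding g_def by simp
  qed
  have bound: "\<bar>g m x\<bar> \<le> B * indicator K' x" for m x
  proof (cases "x \<in> K'")
    case False
    then have "x \<notin> K" "x + t m *\<^sub>R v \<notin> K"
      using tpos[of m] unfolding K'_def
      apply (auto simp: image_iff)
      apply force
      by (metis add_diff_cancel atLeastAtMost_iff less_imp_le)
    then show ?thesis using z False by (simp add: g_def)
  next
    case True
    obtain zz where zz: "0 < zz" "zz < t m"
      "h (x + t m *\<^sub>R v) - h (x + 0 *\<^sub>R v) = (t m - 0) * D (x + zz *\<^sub>R v)"
      using MVT2[of 0 "t m" "\<lambda>s. h (x + s *\<^sub>R v)" "\<lambda>s. D (x + s *\<^sub>R v)"] tpos[of m] line by blast
    then have "g m x = D (x + zz *\<^sub>R v)" using tpos[of m] by (simp add: g_def)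
    then show ?thesis using B True by simp
  qed
  have "emeasure lborel K' < \<infinity>"
    using emeasure_bounded_finite[OF compact_imp_bounded[OF K'c]] .
  then have wi: "integrable lborel (\<lambda>x. B * indicator K' x)"
    using K'c by (intro integrable_mult_right integrable_real_indicator)
      (auto simp: compact_imp_closed)
  have gm: "g m \<in> borel_measurable lborel" for m
    unfolding g_def using hm by measurable
  have "(\<lambda>m. integral\<^sup>L lborel (g m)) \<longlonglongrightarrow> integral\<^sup>L lborel D"
    by (rule integral_dominated_convergence[OF _ gm wi]) (use Dm conv bound in auto)
  then have "(\<lambda>m. 0::real) \<longlonglongrightarrow> integral\<^sup>L lborel D" using gi0 by simp
  then show ?thesis unfolding D_def using LIMSEQ_unique tendsto_const by blast
qed

lemma test_fn_props:
  assumes "test_fn \<Omega> \<phi>"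
  shows "compact (closure {x. \<phi> x \<noteq> 0})" "closure {x. \<phi> x \<noteq> 0} \<subseteq> \<Omega>"
    "\<And>x. x \<notin> closure {x. \<phi> x \<noteq> 0} \<Longrightarrow> \<phi> x = 0" "\<And>k. Ck_on k UNIV \<phi>"
proof -
  show "compact (closure {x. \<phi> x \<noteq> 0})" "closure {x. \<phi> x \<noteq> 0} \<subseteq> \<Omega>"
    using assms unfolding test_fn_def by auto
  show "\<And>k. Ck_on k UNIV \<phi>" using assms unfolding test_fn_def smooth_on_def by blast
  show "\<phi> x = 0" if "x \<notin> closure {x. \<phi> x \<noteq> 0}" for x
    using that closure_subset[of "{x. \<phi> x \<noteq> 0}"] by blast
qed
lemma ext_fd:
  fixes u :: "'a::real_normed_vector \<Rightarrow> real"
  assumes "open \<Omega>" "x \<in> \<Omega>" "u differentiable (at x)" "\<phi> differentiable (at x)"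
  shows "frechet_derivative (\<lambda>x. if x \<in> \<Omega> then u x * \<phi> x else 0) (at x) v
     = frechet_derivative u (at x) v * \<phi> x + u x * frechet_derivative \<phi> (at x) v"
proof -
  have "((\<lambda>x. u x * \<phi> x) has_derivative
     (\<lambda>v. u x * frechet_derivative \<phi> (at x) v + frechet_derivative u (at x) v * \<phi> x)) (at x)"
    using has_derivative_mult[OF assms(3)[unfolded frechet_derivative_works] assms(4)[unfolded frechet_derivative_works]] .
  then have "((\<lambda>x. if x \<in> \<Omega> then u x * \<phi> x else 0) has_derivative
     (\<lambda>v. u x * frechet_derivative \<phi> (at x) v + frechet_derivative u (at x) v * \<phi> x)) (at x)"
    by (rule has_derivative_transform_within_open[OF _ assms(1,2)]) simp
  then have "(\<lambda>v. u x * frechet_derivative \<phi> (at x) v + frechet_derivative u (at x) v * \<phi> x)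
     = frechet_derivative (\<lambda>x. if x \<in> \<Omega> then u x * \<phi> x else 0) (at x)"
    by (rule frechet_derivative_at)
  from fun_cong[OF this[symmetric], of v] show ?thesis by simp
qed

lemma ibp:
  fixes \<Omega> :: "(complex^'n) set" and u :: "complex^'n \<Rightarrow> real"
  assumes "open \<Omega>" "Ck_on 1 \<Omega> u" "test_fn \<Omega> \<phi>"
  shows "(LINT x:\<Omega>|lborel. u x * pd \<phi> v x) = - (LINT x:\<Omega>|lborel. pd u v x * \<phi> x)"
proof -
  define K where "K = closure {x. \<phi> x \<noteq> 0}"
  note tf = test_fn_props[OF assms(3), folded K_def]
  have Kc: "closed K" using tf(1) compact_imp_closed by blast
  define h where "h x = (if x \<in> \<Omega> then u x * \<phi> x else 0)" for x
  have h1: "Ck_on 1 UNIV h" unfolding h_def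
    by (rule Ck_ext[OF assms(1,2) tf(4) Kc tf(2) tf(3)])
  have hz: "h x = 0" if "x \<notin> K" for x using tf(3) that by (simp add: h_def)
  define H1 where "H1 x = (if x \<in> \<Omega> then pd u v x * \<phi> x else 0)" for x
  define H2 where "H2 x = (if x \<in> \<Omega> then u x * pd \<phi> v x else 0)" for x
  have pdz: "pd \<phi> v x = 0" if "x \<notin> K" for x
    unfolding pd_def by (rule fd_zero_outside[OF Kc tf(3) that])
  have ud: "u differentiable (at x)" if "x \<in> \<Omega>" for x using assms(2) that by simp
  have pd_d: "\<phi> differentiable (at x)" for x using tf(4)[of 1] by simp
  have fdh: "frechet_derivative h (at x) v = H1 x + H2 x" for x
  proof (cases "x \<in> \<Omega>")
    case True
    then show ?thesis unfolding h_def H1_def H2_def pd_def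
      using ext_fd[OF assms(1) True ud[OF True] pd_d] by simp
  next
    case False
    then have "x \<notin> K" using tf(2) by blast
    then show ?thesis using fd_zero_outside[OF Kc hz] False by (simp add: H1_def H2_def)
  qed
  have c1: "Ck_on 0 UNIV H1" unfolding H1_def
    apply (rule Ck_ext[OF assms(1) _ _ Kc tf(2) tf(3)])
    using assms(2) unfolding pd_def One_nat_def Ck_on.simps(2) apply blast
    by (rule tf(4))
  have c2: "Ck_on 0 UNIV H2" unfolding H2_def
    apply (rule Ck_ext[OF assms(1) _ _ Kc tf(2) pdz])
    using assms(2) Ck_mono[of 0 \<Omega> u] apply simp
    using tf(4)[of 1] unfolding pd_def One_nat_def Ck_on.simps(2) by blast
  have H1z: "H1 x = 0" if "x \<notin> K" for x using tf(3) that by (simp add: H1_def)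
  have H2z: "H2 x = 0" if "x \<notin> K" for x using pdz that by (simp add: H2_def)
  have i1: "integrable lborel H1" using cont_compact_integrable[OF _ tf(1) H1z] c1 by simp
  have i2: "integrable lborel H2" using cont_compact_integrable[OF _ tf(1) H2z] c2 by simp
  have "integral\<^sup>L lborel (\<lambda>x. frechet_derivative h (at x) v) = 0"
    apply (rule ibp_core[OF _ _ tf(1) hz])
    using h1 unfolding One_nat_def Ck_on.simps(2) Ck_on.simps(1) by blast+
  then have "integral\<^sup>L lborel H1 + integral\<^sup>L lborel H2 = 0"
    using i1 i2 by (simp add: fdh)
  moreover have "(LINT x:\<Omega>|lborel. u x * pd \<phi> v x) = integral\<^sup>L lborel H2"
    unfolding set_lebesgue_integral_def H2_def by (intro Bochner_Integration.integral_cong) (auto simp: indicator_def)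
  moreover have "(LINT x:\<Omega>|lborel. pd u v x * \<phi> x) = integral\<^sup>L lborel H1"
    unfolding set_lebesgue_integral_def H1_def by (intro Bochner_Integration.integral_cong) (auto simp: indicator_def)
  ultimately show ?thesis by linarith
qed

lemma test_ext:
  fixes \<Omega> :: "(complex^'n) set"
  assumes "open \<Omega>" "smooth_on \<Omega> b" "test_fn \<Omega> \<phi>"
  shows "test_fn \<Omega> (\<lambda>x. if x \<in> \<Omega> then b x * \<phi> x else 0)"
proof -
  define K where "K = closure {x. \<phi> x \<noteq> 0}"
  note tf = test_fn_props[OF assms(3), folded K_def]
  have Kc: "closed K" using tf(1) compact_imp_closed by blast
  have sm: "smooth_on UNIV (\<lambda>x. if x \<in> \<Omega> then b x * \<phi> x else 0)"
    unfolding smooth_on_def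
    using Ck_ext[OF assms(1) _ tf(4) Kc tf(2) tf(3)] assms(2) unfolding smooth_on_def by blast
  define S where "S = {x. (if x \<in> \<Omega> then b x * \<phi> x else 0) \<noteq> 0}"
  have sub: "S \<subseteq> K"
    using tf(3) unfolding S_def by auto
  then have cs: "closure S \<subseteq> K"
    using Kc closure_minimal by blast
  then have e: "closure S = K \<inter> closure S" by blast
  have "compact (K \<inter> closure S)"
    using compact_Int_closed[OF tf(1) closed_closure] .
  then have "compact (closure S)" using e by simp
  then show ?thesis unfolding test_fn_def using sm cs tf(2) unfolding S_def by blast
qed

lemma ext_nonneg:
  assumes "\<And>x. 0 \<le> \<phi> x" "\<And>x. x \<in> \<Omega> \<Longrightarrow> 0 \<le> b x"
  shows "0 \<le> (if x \<in> \<Omega> then b x * \<phi> x else (0::real))"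
  using assms by auto

lemma meas_cont:
  fixes \<Omega> :: "(complex^'n) set"
  assumes "open \<Omega>" "continuous_on \<Omega> (g :: _ \<Rightarrow> real)"
  shows "set_borel_measurable lborel \<Omega> g"
  unfolding set_borel_measurable_def
  using borel_measurable_continuous_on_indicator[OF _ assms(2)] assms(1)
  by (simp add: measurable_lborel2)

lemma ind_sq: "(indicator A x :: real) * indicator A x = indicator A x"
  by (simp add: indicator_def)

lemma L2_mult:
  fixes \<Omega> :: "(complex^'n) set"
  assumes "open \<Omega>" "continuous_on \<Omega> a" "\<forall>x\<in>\<Omega>. \<bar>a x\<bar> \<le> 1" "L2_on \<Omega> g"
  shows "L2_on \<Omega> (\<lambda>x. a x * g x)"
proof -
  have ma: "(\<lambda>x. indicator \<Omega> x *\<^sub>R a x) \<in> borel_measurable lborel"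
    using meas_cont[OF assms(1,2)] unfolding set_borel_measurable_def .
  have mg: "(\<lambda>x. indicator \<Omega> x *\<^sub>R g x) \<in> borel_measurable lborel"
    using assms(4) unfolding L2_on_def set_borel_measurable_def by blast
  have e: "(\<lambda>x. indicator \<Omega> x *\<^sub>R (a x * g x)) = (\<lambda>x. (indicator \<Omega> x *\<^sub>R a x) * (indicator \<Omega> x *\<^sub>R g x))"
    by (auto simp: indicator_def)
  have m: "(\<lambda>x. indicator \<Omega> x *\<^sub>R (a x * g x)) \<in> borel_measurable lborel"
    unfolding e using ma mg by measurable
  have e2: "(\<lambda>x. indicator \<Omega> x *\<^sub>R (a x * g x)\<^sup>2) = (\<lambda>x. (indicator \<Omega> x *\<^sub>R (a x * g x))\<^sup>2)"
    by (auto simp: indicator_def)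
  have m2: "(\<lambda>x. indicator \<Omega> x *\<^sub>R (a x * g x)\<^sup>2) \<in> borel_measurable lborel"
    unfolding e2 using m by measurable
  have i: "integrable lborel (\<lambda>x. indicator \<Omega> x *\<^sub>R (g x)\<^sup>2)"
    using assms(4) unfolding L2_on_def set_integrable_def by blast
  have b: "norm (indicator \<Omega> x *\<^sub>R (a x * g x)\<^sup>2) \<le> norm (indicator \<Omega> x *\<^sub>R (g x)\<^sup>2)" for x
  proof (cases "x \<in> \<Omega>")
    case True
    then have "\<bar>a x\<bar> \<le> 1" using assms(3) by blast
    then have "(a x)\<^sup>2 \<le> 1" by (metis abs_le_square_iff abs_one power_one)
    then have "(a x)\<^sup>2 * (g x)\<^sup>2 \<le> 1 * (g x)\<^sup>2" by (intro mult_right_mono) auto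
    then show ?thesis using True by (simp add: power_mult_distrib)
  qed simp
  have "integrable lborel (\<lambda>x. indicator \<Omega> x *\<^sub>R (a x * g x)\<^sup>2)"
    by (rule Bochner_Integration.integrable_bound[OF i m2]) (use b in auto)
  then show ?thesis unfolding L2_on_def set_integrable_def set_borel_measurable_def using m by blast
qed

lemma W12_transfer:
  fixes \<Omega> :: "(complex^'n) set"
  assumes \<Omega>: "open \<Omega>" and f1: "Ck_on 1 \<Omega> f" and u1: "Ck_on 1 \<Omega> u" and as: "smooth_on \<Omega> a"
    and ab: "\<forall>x\<in>\<Omega>. \<bar>a x\<bar> \<le> 1"
    and du: "\<forall>x\<in>\<Omega>. \<forall>v. pd u v x = a x * pd f v x"
    and uL2: "L2_on \<Omega> u" and G: "W12_grad \<Omega> f G"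
  shows "W12_grad \<Omega> u (\<lambda>v x. a x * G v x)"
proof -
  have ac: "continuous_on \<Omega> a" using as unfolding smooth_on_def by (metis Ck_on.simps(1))
  have sb: "\<Omega> \<in> sets lborel" using \<Omega> by simp
  have wd: "weak_deriv \<Omega> u v (\<lambda>x. a x * G v x)" if v: "v \<in> Basis" for v
    unfolding weak_deriv_def
  proof (intro allI impI)
    fix \<phi> assume tf: "test_fn \<Omega> \<phi>"
    define \<psi> where "\<psi> x = (if x \<in> \<Omega> then a x * \<phi> x else 0)" for x
    have tp: "test_fn \<Omega> \<psi>" unfolding \<psi>_def by (rule test_ext[OF \<Omega> as tf])
    have 1: "(LINT x:\<Omega>|lborel. u x * pd \<phi> v x) = - (LINT x:\<Omega>|lborel. pd u v x * \<phi> x)"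
      by (rule ibp[OF \<Omega> u1 tf])
    have 2: "(LINT x:\<Omega>|lborel. pd u v x * \<phi> x) = (LINT x:\<Omega>|lborel. pd f v x * \<psi> x)"
      by (rule set_lebesgue_integral_cong[OF sb]) (use du in \<open>auto simp: \<psi>_def\<close>)
    have 3: "(LINT x:\<Omega>|lborel. f x * pd \<psi> v x) = - (LINT x:\<Omega>|lborel. pd f v x * \<psi> x)"
      by (rule ibp[OF \<Omega> f1 tp])
    have 4: "(LINT x:\<Omega>|lborel. f x * pd \<psi> v x) = - (LINT x:\<Omega>|lborel. G v x * \<psi> x)"
      using G v tp unfolding W12_grad_def weak_deriv_def by blast
    have 5: "(LINT x:\<Omega>|lborel. G v x * \<psi> x) = (LINT x:\<Omega>|lborel. (a x * G v x) * \<phi> x)"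
      by (rule set_lebesgue_integral_cong[OF sb]) (auto simp: \<psi>_def)
    show "(LINT x:\<Omega>|lborel. u x * pd \<phi> v x) = - (LINT x:\<Omega>|lborel. (a x * G v x) * \<phi> x)"
      using 1 2 3 4 5 by simp
  qed
  have l2: "L2_on \<Omega> (\<lambda>x. a x * G v x)" if "v \<in> Basis" for v
    using L2_mult[OF \<Omega> ac ab] G that unfolding W12_grad_def by blast
  show ?thesis unfolding W12_grad_def using uL2 wd l2 by blast
qed

lemma smooth_const: "smooth_on S (\<lambda>x. c)"
  unfolding smooth_on_def using Ck_const by blast

lemma smooth_add: "open S \<Longrightarrow> smooth_on S f \<Longrightarrow> smooth_on S g \<Longrightarrow> smooth_on S (\<lambda>x. f x + g x :: real)"
  unfolding smooth_on_def using Ck_add by blast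

lemma smooth_mult: "open S \<Longrightarrow> smooth_on S f \<Longrightarrow> smooth_on S g \<Longrightarrow> smooth_on S (\<lambda>x. f x * g x :: real)"
  unfolding smooth_on_def using Ck_mult by blast

lemma T_split:
  fixes \<Omega> :: "(complex^'n) set"
  assumes "is_current11 \<Omega> T" "test_fn \<Omega> \<phi>" "test_fn \<Omega> \<psi>1" "test_fn \<Omega> \<psi>2"
    "\<And>x. \<psi>1 x + \<psi>2 x = c * \<phi> x"
  shows "complex_of_real c * T j k \<phi> = T j k \<psi>1 + T j k \<psi>2"
proof -
  have "T j k (\<lambda>x. 1 * \<psi>1 x + 1 * \<psi>2 x) = of_real 1 * T j k \<psi>1 + of_real 1 * T j k \<psi>2"
    using assms(1,3,4) unfolding is_current11_def by blast
  moreover have "T j k (\<lambda>x. c * \<phi> x + 0 * \<phi> x) = of_real c * T j k \<phi> + of_real 0 * T j k \<phi>"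
    using assms(1,2) unfolding is_current11_def by blast
  moreover have "(\<lambda>x. 1 * \<psi>1 x + 1 * \<psi>2 x) = (\<lambda>x. c * \<phi> x + 0 * \<phi> x)"
    using assms(5) by auto
  ultimately show ?thesis by simp
qed

lemma ddc_scale:
  fixes \<Omega> :: "(complex^'n) set"
  assumes "open \<Omega>"
  shows "ddc_current \<Omega> (\<lambda>v x. a x * G v x) j k \<phi>
     = ddc_current \<Omega> G j k (\<lambda>x. if x \<in> \<Omega> then (a x * a x) * \<phi> x else 0)"
  unfolding ddc_current_def
  apply (rule arg_cong[where f="\<lambda>z. z / of_real pi"])
  apply (rule set_lebesgue_integral_cong)
  using assms apply simp
  apply (auto simp: dz_f_def field_simps)
  done

lemma adm_transfer:
  fixes \<Omega> :: "(complex^'n) set"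
  assumes \<Omega>: "open \<Omega>" and f1: "Ck_on 1 \<Omega> f" and u1: "Ck_on 1 \<Omega> u" and as: "smooth_on \<Omega> a"
    and ab: "\<forall>x\<in>\<Omega>. \<bar>a x\<bar> \<le> l" and l: "0 < l" "l \<le> 1"
    and du: "\<forall>x\<in>\<Omega>. \<forall>v. pd u v x = a x * pd f v x"
    and uL2: "L2_on \<Omega> u" and T: "T \<in> admissible_T \<Omega> f"
  shows "(\<lambda>j k \<phi>. complex_of_real (l\<^sup>2) * T j k \<phi>) \<in> admissible_T \<Omega> u"
    and "mass11 \<Omega> (\<lambda>j k \<phi>. complex_of_real (l\<^sup>2) * T j k \<phi>) = ennreal (l\<^sup>2) * mass11 \<Omega> T"
proof -
  define T' where "T' = (\<lambda>j k \<phi>. complex_of_real (l\<^sup>2) * T j k \<phi>)"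
  have Tc: "is_current11 \<Omega> T" and Tp: "positive11 \<Omega> T" and Tcl: "closed11 \<Omega> T"
    and Tm: "mass11 \<Omega> T < \<infinity>" and Td: "dominated_by \<Omega> f T"
    using T unfolding admissible_T_def closed_positive11_def by auto
  obtain G where G: "W12_grad \<Omega> f G" and GP: "positive11 \<Omega> (\<lambda>j k \<phi>. T j k \<phi> - ddc_current \<Omega> G j k \<phi>)"
    using Td unfolding dominated_by_def by blast
  have ab1: "\<forall>x\<in>\<Omega>. \<bar>a x\<bar> \<le> 1" using ab l by force
  have W: "W12_grad \<Omega> u (\<lambda>v x. a x * G v x)"
    by (rule W12_transfer[OF \<Omega> f1 u1 as ab1 du uL2 G])
  have c': "is_current11 \<Omega> T'"
    using Tc unfolding is_current11_def T'_def by (simp add: algebra_simps)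
  have p': "positive11 \<Omega> T'"
    unfolding positive11_def Let_def
  proof (intro allI impI)
    fix \<phi> :: "complex^'n \<Rightarrow> real" and \<xi> :: "'n \<Rightarrow> complex"
    assume "test_fn \<Omega> \<phi>" "\<forall>x. 0 \<le> \<phi> x"
    then have q: "Im (\<Sum>j\<in>UNIV. \<Sum>k\<in>UNIV. T j k \<phi> * \<xi> j * cnj (\<xi> k)) = 0 \<and>
        0 \<le> Re (\<Sum>j\<in>UNIV. \<Sum>k\<in>UNIV. T j k \<phi> * \<xi> j * cnj (\<xi> k))"
      using Tp unfolding positive11_def Let_def by blast
    have e: "(\<Sum>j\<in>UNIV. \<Sum>k\<in>UNIV. T' j k \<phi> * \<xi> j * cnj (\<xi> k)) =
      complex_of_real (l\<^sup>2) * (\<Sum>j\<in>UNIV. \<Sum>k\<in>UNIV. T j k \<phi> * \<xi> j * cnj (\<xi> k))"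
      unfolding T'_def by (simp add: sum_distrib_left mult.assoc)
    show "Im (\<Sum>j\<in>UNIV. \<Sum>k\<in>UNIV. T' j k \<phi> * \<xi> j * cnj (\<xi> k)) = 0 \<and>
        0 \<le> Re (\<Sum>j\<in>UNIV. \<Sum>k\<in>UNIV. T' j k \<phi> * \<xi> j * cnj (\<xi> k))"
      unfolding e using q by simp
  qed
  have dz: "T_dz T' j k m \<phi> = of_real (l\<^sup>2) * T_dz T j k m \<phi>" for j k m \<phi>
    unfolding T_dz_def T'_def by (simp add: algebra_simps)
  have dzb: "T_dzbar T' j k m \<phi> = of_real (l\<^sup>2) * T_dzbar T j k m \<phi>" for j k m \<phi>
    unfolding T_dzbar_def T'_def by (simp add: algebra_simps)
  have cl': "closed11 \<Omega> T'"
    using Tcl unfolding closed11_def dz dzb by simp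
  show mass: "mass11 \<Omega> T' = ennreal (l\<^sup>2) * mass11 \<Omega> T"
  proof -
    have "ennreal (\<Sum>j\<in>UNIV. Re (T' j j \<phi>)) = ennreal (l\<^sup>2) * ennreal (\<Sum>j\<in>UNIV. Re (T j j \<phi>))" for \<phi>
      unfolding T'_def by (simp add: sum_distrib_left[symmetric] ennreal_mult')
    then show ?thesis unfolding mass11_def
      by (simp add: SUP_mult_left_ennreal[symmetric] mult.left_commute)
  qed
  have m': "mass11 \<Omega> T' < \<infinity>"
    unfolding mass using Tm by (simp add: ennreal_mult_less_top)
  have d': "dominated_by \<Omega> u T'"
    unfolding dominated_by_def
  proof (intro exI conjI)
    show "W12_grad \<Omega> u (\<lambda>v x. a x * G v x)" by (rule W)
    show "positive11 \<Omega> (\<lambda>j k \<phi>. T' j k \<phi> - ddc_current \<Omega> (\<lambda>v x. a x * G v x) j k \<phi>)"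
      unfolding positive11_def Let_def
    proof (intro allI impI)
      fix \<phi> :: "complex^'n \<Rightarrow> real" and \<xi> :: "'n \<Rightarrow> complex"
      assume tf: "test_fn \<Omega> \<phi>" and pos: "\<forall>x. 0 \<le> \<phi> x"
      define b1 where "b1 x = l\<^sup>2 + (-1) * (a x * a x)" for x
      define b2 where "b2 x = a x * a x" for x
      define \<psi>1 where "\<psi>1 x = (if x \<in> \<Omega> then b1 x * \<phi> x else 0)" for x
      define \<psi>2 where "\<psi>2 x = (if x \<in> \<Omega> then b2 x * \<phi> x else 0)" for x
      have sb1: "smooth_on \<Omega> b1" unfolding b1_def
        by (intro smooth_add[OF \<Omega>] smooth_mult[OF \<Omega>] smooth_const as)
      have sb2: "smooth_on \<Omega> b2" unfolding b2_def
        by (intro smooth_mult[OF \<Omega>] as)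
      have t1: "test_fn \<Omega> \<psi>1" unfolding \<psi>1_def by (rule test_ext[OF \<Omega> sb1 tf])
      have t2: "test_fn \<Omega> \<psi>2" unfolding \<psi>2_def by (rule test_ext[OF \<Omega> sb2 tf])
      have b1p: "0 \<le> b1 x" if "x \<in> \<Omega>" for x
      proof -
        have "\<bar>a x\<bar> \<le> l" using ab that by blast
        then have "\<bar>a x\<bar> * \<bar>a x\<bar> \<le> l * l" by (intro mult_mono) auto
        then have "a x * a x \<le> l\<^sup>2" by (simp add: power2_eq_square)
        then show ?thesis unfolding b1_def by simp
      qed
      have p1: "\<forall>x. 0 \<le> \<psi>1 x" unfolding \<psi>1_def using pos b1p by simp
      have p2: "\<forall>x. 0 \<le> \<psi>2 x" unfolding \<psi>2_def b2_def using pos by simp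
      have K: "\<phi> x = 0" if "x \<notin> \<Omega>" for x
      proof -
        have "x \<notin> closure {x. \<phi> x \<noteq> 0}" using test_fn_props(2)[OF tf] that by (meson subsetD)
        then show ?thesis by (rule test_fn_props(3)[OF tf])
      qed
      have sum: "\<psi>1 x + \<psi>2 x = l\<^sup>2 * \<phi> x" for x
        unfolding \<psi>1_def \<psi>2_def b1_def b2_def using K[of x] by (auto simp: algebra_simps)
      have spl: "T' j k \<phi> = T j k \<psi>1 + T j k \<psi>2" for j k
        unfolding T'_def by (rule T_split[OF Tc tf t1 t2 sum])
      have dd: "ddc_current \<Omega> (\<lambda>v x. a x * G v x) j k \<phi> = ddc_current \<Omega> G j k \<psi>2" for j k
        unfolding \<psi>2_def b2_def by (rule ddc_scale[OF \<Omega>])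
      have q1: "Im (\<Sum>j\<in>UNIV. \<Sum>k\<in>UNIV. T j k \<psi>1 * \<xi> j * cnj (\<xi> k)) = 0 \<and>
        0 \<le> Re (\<Sum>j\<in>UNIV. \<Sum>k\<in>UNIV. T j k \<psi>1 * \<xi> j * cnj (\<xi> k))"
        using Tp t1 p1 unfolding positive11_def Let_def by blast
      have q2: "Im (\<Sum>j\<in>UNIV. \<Sum>k\<in>UNIV. (T j k \<psi>2 - ddc_current \<Omega> G j k \<psi>2) * \<xi> j * cnj (\<xi> k)) = 0 \<and>
        0 \<le> Re (\<Sum>j\<in>UNIV. \<Sum>k\<in>UNIV. (T j k \<psi>2 - ddc_current \<Omega> G j k \<psi>2) * \<xi> j * cnj (\<xi> k))"
        using GP t2 p2 unfolding positive11_def Let_def by blast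
      have e: "(\<Sum>j\<in>UNIV. \<Sum>k\<in>UNIV. (T' j k \<phi> - ddc_current \<Omega> (\<lambda>v x. a x * G v x) j k \<phi>) * \<xi> j * cnj (\<xi> k))
        = (\<Sum>j\<in>UNIV. \<Sum>k\<in>UNIV. T j k \<psi>1 * \<xi> j * cnj (\<xi> k))
          + (\<Sum>j\<in>UNIV. \<Sum>k\<in>UNIV. (T j k \<psi>2 - ddc_current \<Omega> G j k \<psi>2) * \<xi> j * cnj (\<xi> k))"
        unfolding spl dd by (simp add: sum.distrib[symmetric] algebra_simps)
      show "Im (\<Sum>j\<in>UNIV. \<Sum>k\<in>UNIV. (T' j k \<phi> - ddc_current \<Omega> (\<lambda>v x. a x * G v x) j k \<phi>) * \<xi> j * cnj (\<xi> k)) = 0 \<and>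
        0 \<le> Re (\<Sum>j\<in>UNIV. \<Sum>k\<in>UNIV. (T' j k \<phi> - ddc_current \<Omega> (\<lambda>v x. a x * G v x) j k \<phi>) * \<xi> j * cnj (\<xi> k))"
        unfolding e using q1 q2 by simp
    qed
  qed
  show "(\<lambda>j k \<phi>. complex_of_real (l\<^sup>2) * T j k \<phi>) \<in> admissible_T \<Omega> u"
    using c' p' cl' m' d' unfolding T'_def admissible_T_def closed_positive11_def by blast
qed

lemma star_transfer:
  fixes \<Omega> :: "(complex^'n) set"
  assumes \<Omega>: "open \<Omega>" and f1: "Ck_on 1 \<Omega> f" and u1: "Ck_on 1 \<Omega> u" and as: "smooth_on \<Omega> a"
    and ab: "\<forall>x\<in>\<Omega>. \<bar>a x\<bar> \<le> l" and l: "0 < l" "l \<le> 1"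
    and du: "\<forall>x\<in>\<Omega>. \<forall>v. pd u v x = a x * pd f v x"
    and uL2: "L2_on \<Omega> u" and W: "Wstar \<Omega> f"
  shows "star_norm \<Omega> u \<le> L1norm \<Omega> u + ennreal (l * sqrt (enn2real (INF T\<in>admissible_T \<Omega> f. mass11 \<Omega> T)))"
proof -
  define Mf where "Mf = (INF T\<in>admissible_T \<Omega> f. mass11 \<Omega> T)"
  define Mu where "Mu = (INF T\<in>admissible_T \<Omega> u. mass11 \<Omega> T)"
  obtain T0 where T0: "T0 \<in> admissible_T \<Omega> f" using W unfolding Wstar_def by blast
  note tr = adm_transfer[OF \<Omega> f1 u1 as ab l du uL2]
  have Wu: "Wstar \<Omega> u"
  proof -
    have "dominated_by \<Omega> u (\<lambda>j k \<phi>. complex_of_real (l\<^sup>2) * T0 j k \<phi>)"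
      using tr(1)[OF T0] unfolding admissible_T_def by blast
    then have "W12 \<Omega> u" unfolding dominated_by_def W12_def by blast
    then show ?thesis unfolding Wstar_def using tr(1)[OF T0] by blast
  qed
  define c where "c = ennreal (l\<^sup>2)"
  define c' where "c' = ennreal (1 / l\<^sup>2)"
  have cc: "c' * c = 1" unfolding c_def c'_def using l
    by (simp add: ennreal_mult'[symmetric])
  have "c' * Mu \<le> mass11 \<Omega> T" if T: "T \<in> admissible_T \<Omega> f" for T
  proof -
    have "Mu \<le> c * mass11 \<Omega> T" unfolding Mu_def c_def
      using tr(2)[OF T] INF_lower[OF tr(1)[OF T], of "mass11 \<Omega>"] by simp
    then have "c' * Mu \<le> c' * (c * mass11 \<Omega> T)" by (rule mult_left_mono) simp
    also have "\<dots> = mass11 \<Omega> T" using cc by (simp add: mult.assoc[symmetric])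
    finally show ?thesis .
  qed
  then have "c' * Mu \<le> Mf" unfolding Mf_def by (rule INF_greatest)
  then have "c * (c' * Mu) \<le> c * Mf" by (rule mult_left_mono) simp
  moreover have "c * (c' * Mu) = (c' * c) * Mu" by (simp add: ac_simps)
  ultimately have MuMf: "Mu \<le> c * Mf" using cc by simp
  have Mf1: "Mf \<le> mass11 \<Omega> T0" unfolding Mf_def by (rule INF_lower[OF T0])
  have "mass11 \<Omega> T0 < \<infinity>" using T0 unfolding admissible_T_def by blast
  then have Mffin: "Mf < \<infinity>" using Mf1 by (rule le_less_trans[rotated])
  have "enn2real Mu \<le> enn2real (c * Mf)"
    using MuMf Mffin by (intro enn2real_mono) (auto simp: c_def ennreal_mult_less_top)
  also have "\<dots> = l\<^sup>2 * enn2real Mf" unfolding c_def by (simp add: enn2real_mult)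
  finally have "sqrt (enn2real Mu) \<le> sqrt (l\<^sup>2 * enn2real Mf)" by simp
  also have "\<dots> = l * sqrt (enn2real Mf)" using l by (simp add: real_sqrt_mult)
  finally have "sqrt (enn2real Mu) \<le> l * sqrt (enn2real Mf)" .
  then have "ennreal (sqrt (enn2real Mu)) \<le> ennreal (l * sqrt (enn2real Mf))" by (rule ennreal_leI)
  then have "L1norm \<Omega> u + ennreal (sqrt (enn2real Mu)) \<le> L1norm \<Omega> u + ennreal (l * sqrt (enn2real Mf))"
    by (rule add_left_mono)
  moreover have "star_norm \<Omega> u = L1norm \<Omega> u + ennreal (sqrt (enn2real Mu))"
    unfolding star_norm_def Mu_def using Wu by simp
  ultimately show ?thesis unfolding Mf_def by simp
qed

lemma L1_bound:
  fixes \<Omega> :: "(complex^'n) set"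
  assumes "open \<Omega>" "bounded \<Omega>" "continuous_on \<Omega> f" "0 \<le> l" "0 \<le> e"
    "\<forall>x\<in>\<Omega>. \<bar>u x\<bar> \<le> l * (\<bar>f x\<bar> + e)"
  shows "L1norm \<Omega> u \<le> ennreal l * (L1norm \<Omega> f + ennreal (e * measure lborel \<Omega>))"
proof -
  have sb: "\<Omega> \<in> sets lborel" using assms(1) by simp
  have mf: "(\<lambda>x. indicator \<Omega> x *\<^sub>R f x) \<in> borel_measurable lborel"
    using meas_cont[OF assms(1,3)] unfolding set_borel_measurable_def .
  have e1: "(\<lambda>x. ennreal \<bar>f x\<bar> * indicator \<Omega> x) = (\<lambda>x. ennreal \<bar>indicator \<Omega> x *\<^sub>R f x\<bar>)"
    by (auto simp: indicator_def fun_eq_iff)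
  have mf2: "(\<lambda>x. ennreal \<bar>f x\<bar> * indicator \<Omega> x) \<in> borel_measurable lborel"
    unfolding e1 using mf by measurable
  have mi: "(\<lambda>x. ennreal e * indicator \<Omega> x) \<in> borel_measurable lborel"
    using sb by measurable
  have "L1norm \<Omega> u \<le> (\<integral>\<^sup>+ x. ennreal l * (ennreal \<bar>f x\<bar> * indicator \<Omega> x + ennreal e * indicator \<Omega> x) \<partial>lborel)"
    unfolding L1norm_def
  proof (rule nn_integral_mono)
    fix x
    show "ennreal \<bar>u x\<bar> * indicator \<Omega> x \<le> ennreal l * (ennreal \<bar>f x\<bar> * indicator \<Omega> x + ennreal e * indicator \<Omega> x)"
    proof (cases "x \<in> \<Omega>")
      case True
      then have "ennreal \<bar>u x\<bar> \<le> ennreal (l * (\<bar>f x\<bar> + e))" using assms(6) by (intro ennreal_leI) auto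
      also have "\<dots> = ennreal l * (ennreal \<bar>f x\<bar> + ennreal e)"
        using assms(4,5) by (simp add: ennreal_mult' ennreal_plus)
      finally show ?thesis using True by simp
    qed simp
  qed
  also have "\<dots> = ennreal l * ((\<integral>\<^sup>+ x. ennreal \<bar>f x\<bar> * indicator \<Omega> x \<partial>lborel) + (\<integral>\<^sup>+ x. ennreal e * indicator \<Omega> x \<partial>lborel))"
    using mf2 mi by (simp add: nn_integral_cmult nn_integral_add)
  also have "(\<integral>\<^sup>+ x. ennreal e * indicator \<Omega> x \<partial>lborel) = ennreal (e * measure lborel \<Omega>)"
    using nn_integral_cmult_indicator[OF sb, of "ennreal e"] emeasure_bounded_finite[OF assms(2)] assms(5)
    by (simp add: emeasure_eq_ennreal_measure ennreal_mult')
  finally show ?thesis unfolding L1norm_def .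
qed

lemma smooth_sqrt: "open S \<Longrightarrow> smooth_on S g \<Longrightarrow> \<forall>x\<in>S. g x > 0 \<Longrightarrow> smooth_on S (\<lambda>x. sqrt (g x :: real))"
  unfolding smooth_on_def using Ck_sqrt by blast

lemma smooth_inverse: "open S \<Longrightarrow> smooth_on S g \<Longrightarrow> \<forall>x\<in>S. g x \<noteq> 0 \<Longrightarrow> smooth_on S (\<lambda>x. inverse (g x :: real))"
  unfolding smooth_on_def using Ck_inverse by blast

lemma chi_props:
  fixes \<Omega> :: "(complex^'n) set" and f :: "complex^'n \<Rightarrow> real"
  assumes \<Omega>: "open \<Omega>" and sf: "smooth_on \<Omega> f" and d: "d > 0" and s: "s = 1 \<or> s = -1"
    and l: "0 < l" "l \<le> 1"
  defines "u \<equiv> \<lambda>x. l * ((s * f x + sqrt ((f x)\<^sup>2 + d\<^sup>2)) / 2)"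
    and "a \<equiv> \<lambda>x. l * ((s + f x * inverse (sqrt ((f x)\<^sup>2 + d\<^sup>2))) / 2)"
  shows "smooth_on \<Omega> u" "smooth_on \<Omega> a" "\<forall>x\<in>\<Omega>. \<bar>a x\<bar> \<le> l"
    "\<forall>x\<in>\<Omega>. \<forall>v. pd u v x = a x * pd f v x" "\<And>x. 0 \<le> u x"
    "\<And>x. \<bar>u x\<bar> \<le> l * (\<bar>f x\<bar> + d / 2)"
proof -
  have pos: "(f x)\<^sup>2 + d\<^sup>2 > 0" for x using d by (simp add: add_nonneg_pos)
  have sq: "smooth_on \<Omega> (\<lambda>x. sqrt (f x * f x + d * d))"
    apply (rule smooth_sqrt[OF \<Omega>])
     apply (intro smooth_add[OF \<Omega>] smooth_mult[OF \<Omega>] sf smooth_const)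
    using pos by (simp add: power2_eq_square)
  have "smooth_on \<Omega> (\<lambda>x. (l/2) * (s * f x + sqrt (f x * f x + d * d)))"
    by (intro smooth_add[OF \<Omega>] smooth_mult[OF \<Omega>] sf smooth_const sq)
  moreover have "(\<lambda>x. (l/2) * (s * f x + sqrt (f x * f x + d * d))) = u"
    unfolding u_def by (auto simp: fun_eq_iff power2_eq_square)
  ultimately show "smooth_on \<Omega> u" by simp
  have sqi: "smooth_on \<Omega> (\<lambda>x. inverse (sqrt (f x * f x + d * d)))"
    apply (rule smooth_inverse[OF \<Omega> sq]) using pos d by (simp add: power2_eq_square)
  have "smooth_on \<Omega> (\<lambda>x. (l/2) * (s + f x * inverse (sqrt (f x * f x + d * d))))"
    by (intro smooth_add[OF \<Omega>] smooth_mult[OF \<Omega>] sf smooth_const sqi)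
  moreover have "(\<lambda>x. (l/2) * (s + f x * inverse (sqrt (f x * f x + d * d)))) = a"
    unfolding a_def by (auto simp: fun_eq_iff power2_eq_square)
  ultimately show "smooth_on \<Omega> a" by simp
  have rl: "\<bar>f x * inverse (sqrt ((f x)\<^sup>2 + d\<^sup>2))\<bar> \<le> 1" for x
  proof -
    have "\<bar>f x\<bar> = sqrt ((f x)\<^sup>2)" by simp
    also have "\<dots> \<le> sqrt ((f x)\<^sup>2 + d\<^sup>2)" by (rule real_sqrt_le_mono) simp
    finally have "\<bar>f x\<bar> \<le> sqrt ((f x)\<^sup>2 + d\<^sup>2)" .
    then show ?thesis using pos[of x] by (simp add: abs_mult field_simps)
  qed
  show "\<forall>x\<in>\<Omega>. \<bar>a x\<bar> \<le> l"
  proof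
    fix x
    have "\<bar>s + f x * inverse (sqrt ((f x)\<^sup>2 + d\<^sup>2))\<bar> \<le> 2" using rl[of x] s by auto
    then show "\<bar>a x\<bar> \<le> l" unfolding a_def using l by (simp add: abs_mult)
  qed
  have sqb: "\<bar>f x\<bar> \<le> sqrt ((f x)\<^sup>2 + d\<^sup>2)" "sqrt ((f x)\<^sup>2 + d\<^sup>2) \<le> \<bar>f x\<bar> + d" for x
  proof -
    show "\<bar>f x\<bar> \<le> sqrt ((f x)\<^sup>2 + d\<^sup>2)"
      using real_sqrt_le_mono[of "(f x)\<^sup>2" "(f x)\<^sup>2 + d\<^sup>2"] by simp
    have "(f x)\<^sup>2 + d\<^sup>2 \<le> (\<bar>f x\<bar> + d)\<^sup>2" using d by (simp add: power2_eq_square algebra_simps)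
    then show "sqrt ((f x)\<^sup>2 + d\<^sup>2) \<le> \<bar>f x\<bar> + d"
      using d real_sqrt_le_mono by (metis abs_of_nonneg add_nonneg_nonneg abs_ge_zero less_imp_le real_sqrt_abs)
  qed
  show "0 \<le> u x" for x
  proof -
    have "0 \<le> s * f x + sqrt ((f x)\<^sup>2 + d\<^sup>2)" using sqb(1)[of x] s by (auto simp: abs_if split: if_splits)
    then show ?thesis unfolding u_def using l by simp
  qed
  show "\<bar>u x\<bar> \<le> l * (\<bar>f x\<bar> + d / 2)" for x
  proof -
    have "0 \<le> s * f x + sqrt ((f x)\<^sup>2 + d\<^sup>2)" using sqb(1)[of x] s by (auto simp: abs_if split: if_splits)
    moreover have "s * f x \<le> \<bar>f x\<bar>" using s by auto
    ultimately have "\<bar>(s * f x + sqrt ((f x)\<^sup>2 + d\<^sup>2)) / 2\<bar> \<le> \<bar>f x\<bar> + d / 2"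
      using sqb(2)[of x] by simp
    then show ?thesis unfolding u_def using l by (simp add: abs_mult mult_left_mono)
  qed
  show "\<forall>x\<in>\<Omega>. \<forall>v. pd u v x = a x * pd f v x"
  proof (intro ballI allI)
    fix x v assume x: "x \<in> \<Omega>"
    have fD: "(f has_derivative frechet_derivative f (at x)) (at x)"
    proof -
      have "Ck_on (Suc 0) \<Omega> f" using sf unfolding smooth_on_def by blast
      then show ?thesis by (rule Ck_D[OF _ x])
    qed
    define Df where "Df = frechet_derivative f (at x)"
    define q where "q = sqrt ((f x)\<^sup>2 + d\<^sup>2)"
    have qp: "q > 0" unfolding q_def using pos by simp
    have g: "((\<lambda>y. (f y)\<^sup>2 + d\<^sup>2) has_derivative (\<lambda>h. 2 * f x * Df h)) (at x)"
      unfolding Df_def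
      by (rule has_derivative_eq_rhs, (rule derivative_eq_intros fD)+) (auto simp: fun_eq_iff)
    have sqd: "((\<lambda>y. sqrt ((f y)\<^sup>2 + d\<^sup>2)) has_derivative (\<lambda>h. 2 * f x * Df h * (inverse q / 2))) (at x)"
      unfolding q_def by (rule DERIV_compose_FDERIV[OF DERIV_real_sqrt[OF pos] g])
    have ud0: "((\<lambda>y. (l/2) * (s * f y + sqrt ((f y)\<^sup>2 + d\<^sup>2))) has_derivative
        (\<lambda>h. (l/2) * (s * Df h + 2 * f x * Df h * (inverse q / 2)))) (at x)"
      by (intro has_derivative_mult_right has_derivative_add sqd fD[folded Df_def])
    have "u = (\<lambda>y. (l/2) * (s * f y + sqrt ((f y)\<^sup>2 + d\<^sup>2)))"
      unfolding u_def by (simp add: fun_eq_iff)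
    then have ud: "(u has_derivative (\<lambda>h. l * ((s * Df h + 2 * f x * Df h * (inverse q / 2)) / 2))) (at x)"
      using ud0 by simp
    have "(\<lambda>h. l * ((s * Df h + 2 * f x * Df h * (inverse q / 2)) / 2)) = (\<lambda>h. a x * Df h)"
      unfolding a_def q_def[symmetric] by (auto simp: fun_eq_iff field_simps)
    then have "(u has_derivative (\<lambda>h. a x * frechet_derivative f (at x) h)) (at x)"
      using ud unfolding Df_def by simp
    then have "frechet_derivative u (at x) = (\<lambda>h. a x * frechet_derivative f (at x) h)"
      by (rule frechet_derivative_at[symmetric])
    then show "pd u v x = a x * pd f v x" unfolding pd_def by simp
  qed
qed

lemma L2_bound:
  fixes \<Omega> :: "(complex^'n) set"
  assumes \<Omega>: "open \<Omega>" "bounded \<Omega>" and uc: "continuous_on \<Omega> u" and fL: "L2_on \<Omega> f"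
    and b: "\<forall>x. \<bar>u x\<bar> \<le> l * (\<bar>f x\<bar> + e)" and l: "0 \<le> l" "l \<le> 1" and e: "0 \<le> e"
  shows "L2_on \<Omega> u"
proof -
  have sb: "\<Omega> \<in> sets lborel" using \<Omega> by simp
  have mu: "(\<lambda>x. indicator \<Omega> x *\<^sub>R u x) \<in> borel_measurable lborel"
    using meas_cont[OF \<Omega>(1) uc] unfolding set_borel_measurable_def .
  have e2: "(\<lambda>x. indicator \<Omega> x *\<^sub>R (u x)\<^sup>2) = (\<lambda>x. (indicator \<Omega> x *\<^sub>R u x)\<^sup>2)"
    by (auto simp: indicator_def)
  have m2: "(\<lambda>x. indicator \<Omega> x *\<^sub>R (u x)\<^sup>2) \<in> borel_measurable lborel"
    unfolding e2 using mu by measurable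
  have i1: "integrable lborel (\<lambda>x. indicator \<Omega> x *\<^sub>R (f x)\<^sup>2)"
    using fL unfolding L2_on_def set_integrable_def by blast
  have i2: "integrable lborel (indicator \<Omega> :: _ \<Rightarrow> real)"
    using sb emeasure_bounded_finite[OF \<Omega>(2)] by (intro integrable_real_indicator) auto
  have i: "integrable lborel (\<lambda>x. 2 * (indicator \<Omega> x *\<^sub>R (f x)\<^sup>2) + (2 * e\<^sup>2) * indicator \<Omega> x)"
    using Bochner_Integration.integrable_add[OF integrable_mult_right[OF i1, of 2] integrable_mult_right[OF i2, of "2 * e\<^sup>2"]] .
  have bd: "norm (indicator \<Omega> x *\<^sub>R (u x)\<^sup>2) \<le> norm (2 * (indicator \<Omega> x *\<^sub>R (f x)\<^sup>2) + (2 * e\<^sup>2) * indicator \<Omega> x)" for x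
  proof (cases "x \<in> \<Omega>")
    case True
    have "\<bar>u x\<bar> \<le> \<bar>f x\<bar> + e"
      using b[rule_format, of x] l e mult_left_le_one_le[of "\<bar>f x\<bar> + e" l] by auto
    then have "\<bar>u x\<bar> * \<bar>u x\<bar> \<le> (\<bar>f x\<bar> + e) * (\<bar>f x\<bar> + e)" by (intro mult_mono) auto
    also have "\<dots> \<le> 2 * (f x)\<^sup>2 + 2 * e\<^sup>2"
      using sum_squares_ge_zero[of "\<bar>f x\<bar> - e" 0] by (simp add: power2_eq_square algebra_simps)
    finally have "(u x)\<^sup>2 \<le> 2 * (f x)\<^sup>2 + 2 * e\<^sup>2" by (simp add: power2_eq_square)
    then show ?thesis using True by simp
  qed simp
  have "integrable lborel (\<lambda>x. indicator \<Omega> x *\<^sub>R (u x)\<^sup>2)"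
    by (rule Bochner_Integration.integrable_bound[OF i m2]) (use bd in auto)
  then show ?thesis unfolding L2_on_def set_integrable_def set_borel_measurable_def using mu by blast
qed

lemma smooth_Ck: "smooth_on S f \<Longrightarrow> Ck_on k S f"
  unfolding smooth_on_def by blast

lemma smooth_cont: "smooth_on S f \<Longrightarrow> continuous_on S f"
  using smooth_Ck[of S f 0] by simp

lemma decomp_one:
  fixes \<Omega> :: "(complex^'n) set" and f :: "complex^'n \<Rightarrow> real"
  assumes \<Omega>: "open \<Omega>" "bounded \<Omega>" and sf: "smooth_on \<Omega> f" and d: "0 < d" "d / 2 * measure lborel \<Omega> \<le> \<eta>"
    and s: "s = 1 \<or> s = -1" and l: "0 < l" "l \<le> 1"
  defines "u \<equiv> \<lambda>x. l * ((s * f x + sqrt ((f x)\<^sup>2 + d\<^sup>2)) / 2)"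
  shows "smooth_on \<Omega> u" "\<And>x. 0 \<le> u x"
    "L1norm \<Omega> u \<le> ennreal l * (L1norm \<Omega> f + ennreal \<eta>)"
    "Wstar \<Omega> f \<Longrightarrow> star_norm \<Omega> u \<le> L1norm \<Omega> u + ennreal (l * sqrt (enn2real (INF T\<in>admissible_T \<Omega> f. mass11 \<Omega> T)))"
proof -
  note cp = chi_props[OF \<Omega>(1) sf d(1) s l, folded u_def]
  show su: "smooth_on \<Omega> u" by (rule cp(1))
  show "\<And>x. 0 \<le> u x" unfolding u_def by (rule chi_props(5)[OF \<Omega>(1) sf d(1) s l])
  have cp6: "\<forall>x. \<bar>u x\<bar> \<le> l * (\<bar>f x\<bar> + d / 2)"
    unfolding u_def using chi_props(6)[OF \<Omega>(1) sf d(1) s l] by blast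
  have "L1norm \<Omega> u \<le> ennreal l * (L1norm \<Omega> f + ennreal (d / 2 * measure lborel \<Omega>))"
    by (rule L1_bound[OF \<Omega> smooth_cont[OF sf]]) (use l d cp6 in auto)
  also have "\<dots> \<le> ennreal l * (L1norm \<Omega> f + ennreal \<eta>)"
    using d(2) by (intro mult_left_mono add_left_mono ennreal_leI) auto
  finally show "L1norm \<Omega> u \<le> ennreal l * (L1norm \<Omega> f + ennreal \<eta>)" .
  assume W: "Wstar \<Omega> f"
  have fL: "L2_on \<Omega> f" using W unfolding Wstar_def W12_def W12_grad_def by blast
  have uL: "L2_on \<Omega> u"
    by (rule L2_bound[OF \<Omega> smooth_cont[OF su] fL]) (use l d cp6 in auto)
  show "star_norm \<Omega> u \<le> L1norm \<Omega> u + ennreal (l * sqrt (enn2real (INF T\<in>admissible_T \<Omega> f. mass11 \<Omega> T)))"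
    by (rule star_transfer[OF \<Omega>(1) smooth_Ck[OF sf] smooth_Ck[OF su] cp(2) cp(3) l cp(4) uL W])
qed

lemma choose_d:
  fixes \<Omega> :: "(complex^'n) set"
  assumes "\<eta> > 0"
  shows "\<exists>d. 0 < d \<and> d / 2 * measure lborel \<Omega> \<le> \<eta>"
proof -
  define V where "V = measure lborel \<Omega>"
  have V: "0 \<le> V" unfolding V_def by simp
  define d where "d = \<eta> / (V + 1)"
  have "0 < d" using assms V unfolding d_def by simp
  moreover have "d / 2 * V \<le> \<eta>"
  proof -
    have "d / 2 * V = \<eta> * (V / (2 * (V + 1)))" unfolding d_def using V by (simp add: field_simps)
    also have "\<dots> \<le> \<eta> * 1" using V assms by (intro mult_left_mono) (auto simp: field_simps)
    finally show ?thesis by simp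
  qed
  ultimately show ?thesis unfolding V_def by blast
qed

lemma part1:
  fixes \<Omega> :: "(complex^'n) set" and f :: "complex^'n \<Rightarrow> real"
  assumes \<Omega>: "open \<Omega>" "bounded \<Omega>" and sf: "smooth_on \<Omega> f" and e: "\<epsilon> > 0"
  shows "\<exists>fp fm :: complex^'n \<Rightarrow> real.
               smooth_on \<Omega> fp \<and> smooth_on \<Omega> fm \<and>
               (\<forall>x\<in>\<Omega>. 0 \<le> fp x \<and> 0 \<le> fm x \<and> f x = fp x - fm x) \<and>
               L1norm \<Omega> fp \<le> L1norm \<Omega> f + ennreal \<epsilon> \<and>
               L1norm \<Omega> fm \<le> L1norm \<Omega> f + ennreal \<epsilon> \<and>
               star_norm \<Omega> fp \<le> star_norm \<Omega> f + ennreal \<epsilon> \<and>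
               star_norm \<Omega> fm \<le> star_norm \<Omega> f + ennreal \<epsilon>"
proof -
  obtain d where d: "0 < d" "d / 2 * measure lborel \<Omega> \<le> \<epsilon>" using choose_d[OF e] by blast
  define fp where "fp = (\<lambda>x. 1 * ((1 * f x + sqrt ((f x)\<^sup>2 + d\<^sup>2)) / 2))"
  define fm where "fm = (\<lambda>x. 1 * (((-1) * f x + sqrt ((f x)\<^sup>2 + d\<^sup>2)) / 2))"
  have one: "(0::real) < 1" "(1::real) \<le> 1" by auto
  note P = decomp_one[OF \<Omega> sf d, of 1 1, OF _ one, folded fp_def]
  note M = decomp_one[OF \<Omega> sf d, of "-1" 1, OF _ one, folded fm_def]
  define M where "M = ennreal (sqrt (enn2real (INF T\<in>admissible_T \<Omega> f. mass11 \<Omega> T)))"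
  have star: "star_norm \<Omega> u \<le> star_norm \<Omega> f + ennreal \<epsilon>"
    if L1: "L1norm \<Omega> u \<le> ennreal 1 * (L1norm \<Omega> f + ennreal \<epsilon>)"
    and st: "Wstar \<Omega> f \<Longrightarrow> star_norm \<Omega> u \<le> L1norm \<Omega> u + ennreal (1 * sqrt (enn2real (INF T\<in>admissible_T \<Omega> f. mass11 \<Omega> T)))"
    for u
  proof (cases "Wstar \<Omega> f")
    case True
    have "star_norm \<Omega> u \<le> L1norm \<Omega> u + M" using st[OF True] unfolding M_def by simp
    also have "\<dots> \<le> (L1norm \<Omega> f + ennreal \<epsilon>) + M" using L1 by (intro add_right_mono) simp
    also have "\<dots> = star_norm \<Omega> f + ennreal \<epsilon>" unfolding star_norm_def M_def using True by (simp add: ac_simps)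
    finally show ?thesis .
  next
    case False
    then show ?thesis unfolding star_norm_def by simp
  qed
  show ?thesis
  proof (intro exI conjI ballI)
    show "smooth_on \<Omega> fp" using P(1) by simp
    show "smooth_on \<Omega> fm" using M(1) by simp
    show "0 \<le> fp x" for x using P(2) unfolding fp_def by simp
    show "0 \<le> fm x" for x using M(2) unfolding fm_def by simp
    show "f x = fp x - fm x" for x unfolding fp_def fm_def by (simp add: field_simps)
    show "L1norm \<Omega> fp \<le> L1norm \<Omega> f + ennreal \<epsilon>" using P(3) by simp
    show "L1norm \<Omega> fm \<le> L1norm \<Omega> f + ennreal \<epsilon>" using M(3) by simp
    show "star_norm \<Omega> fp \<le> star_norm \<Omega> f + ennreal \<epsilon>" using star[OF P(3) P(4)] by simp
    show "star_norm \<Omega> fm \<le> star_norm \<Omega> f + ennreal \<epsilon>" using star[OF M(3) M(4)] by simp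
  qed
qed

lemma cs_integrable:
  fixes \<Omega> :: "(complex^'n) set" and g :: "complex^'n \<Rightarrow> real"
  assumes s: "sets \<nu> = sets borel" and fin: "finite_measure \<nu>" and cs: "compact_support_in \<Omega> \<nu>"
    and \<Omega>: "open \<Omega>" and gc: "continuous_on \<Omega> g"
  shows "integrable \<nu> (\<lambda>x. indicator \<Omega> x *\<^sub>R g x)"
proof -
  obtain K where K: "compact K" "K \<subseteq> \<Omega>" "emeasure \<nu> (space \<nu> - K) = 0"
    using cs unfolding compact_support_in_def by blast
  obtain B where B: "\<And>x. x \<in> K \<Longrightarrow> \<bar>g x\<bar> \<le> B"
  proof -
    have "compact (g ` K)" using compact_continuous_image[OF continuous_on_subset[OF gc K(2)] K(1)] .
    then obtain B0 where "\<forall>y\<in>g ` K. norm y \<le> B0"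
      using compact_imp_bounded bounded_iff by metis
    then show ?thesis using that by auto
  qed
  have sp: "space \<nu> = UNIV" using sets_eq_imp_space_eq[OF s] by simp
  have m: "(\<lambda>x. indicator \<Omega> x *\<^sub>R g x) \<in> borel_measurable \<nu>"
    using borel_measurable_continuous_on_indicator[OF _ gc] \<Omega>
    by (subst measurable_cong_sets[OF s refl]) auto
  have Ks: "space \<nu> - K \<in> sets \<nu>" using K(1) s sp by (simp add: compact_imp_closed borel_closed)
  have ae: "AE x in \<nu>. x \<in> K"
    by (rule AE_I[OF _ K(3) Ks]) (auto simp: sp)
  have "AE x in \<nu>. norm (indicator \<Omega> x *\<^sub>R g x) \<le> norm B"
    using ae by eventually_elim (use B in \<open>force simp: indicator_def\<close>)
  then show ?thesis
    by (intro Bochner_Integration.integrable_bound[OF finite_measure.integrable_const[OF fin] m])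
qed

lemma cmp_integral:
  fixes h :: "'a \<Rightarrow> real"
  assumes s: "sets \<mu> = sets \<mu>'" and i: "integrable \<mu> h" "integrable \<mu>' h" and p: "\<And>x. 0 \<le> h x"
    and le: "\<forall>A\<in>sets \<mu>. emeasure \<mu> A \<le> emeasure \<mu>' A"
  shows "integral\<^sup>L \<mu> h \<le> integral\<^sup>L \<mu>' h"
proof -
  have "\<mu> \<le> \<mu>'" using le s by (simp add: le_measure)
  then have "(\<integral>\<^sup>+ x. ennreal (h x) \<partial>\<mu>) \<le> (\<integral>\<^sup>+ x. ennreal (h x) \<partial>\<mu>')"
    by (rule nn_integral_mono_measure[OF s])
  then have "ennreal (integral\<^sup>L \<mu> h) \<le> ennreal (integral\<^sup>L \<mu>' h)"
    using nn_integral_eq_integral[OF i(1)] nn_integral_eq_integral[OF i(2)] p by simp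
  moreover have "0 \<le> integral\<^sup>L \<mu>' h" using p by simp
  ultimately show ?thesis by (simp add: ennreal_le_iff)
qed

lemma holder_step:
  fixes \<Omega> :: "(complex^'n) set" and f :: "complex^'n \<Rightarrow> real"
  assumes \<Omega>: "open \<Omega>" "bounded \<Omega>"
    and s\<mu>: "sets \<mu> = sets borel" and s\<mu>': "sets \<mu>' = sets borel"
    and f\<mu>: "finite_measure \<mu>" and f\<mu>': "finite_measure \<mu>'"
    and c\<mu>: "compact_support_in \<Omega> \<mu>" and c\<mu>': "compact_support_in \<Omega> \<mu>'"
    and le: "\<forall>A\<in>sets borel. emeasure \<mu> A \<le> emeasure \<mu>' A"
    and c: "c > 0" "\<alpha> > 0"
    and Hol: "\<forall>g. smooth_on \<Omega> g \<and> star_norm \<Omega> g \<le> 1 \<longrightarrow>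
        \<bar>LINT x:\<Omega>|\<mu>'. g x\<bar> \<le> c * enn2real (L1norm \<Omega> g) powr \<alpha>"
    and sf: "smooth_on \<Omega> f" and st: "star_norm \<Omega> f \<le> 1" and \<eta>: "0 < \<eta>"
  shows "\<bar>LINT x:\<Omega>|\<mu>. f x\<bar> \<le> 2 * (1 + \<eta>) * c * (enn2real (L1norm \<Omega> f) + \<eta>) powr \<alpha>"
proof -
  define l where "l = 1 / (1 + \<eta>)"
  have l: "0 < l" "l \<le> 1" using \<eta> unfolding l_def by (auto simp: field_simps)
  have W: "Wstar \<Omega> f" using st unfolding star_norm_def by (auto split: if_splits simp: top_unique)
  define S where "S = ennreal (sqrt (enn2real (INF T\<in>admissible_T \<Omega> f. mass11 \<Omega> T)))"
  have stf: "star_norm \<Omega> f = L1norm \<Omega> f + S" unfolding star_norm_def S_def using W by simp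
  have a1: "L1norm \<Omega> f \<le> L1norm \<Omega> f + S" by simp
  have a2: "L1norm \<Omega> f + S \<le> 1" using st stf by simp
  have L1le: "L1norm \<Omega> f \<le> 1" using order.trans[OF a1 a2] .
  define L where "L = enn2real (L1norm \<Omega> f)"
  have "L1norm \<Omega> f < top" using L1le ennreal_one_less_top by (rule le_less_trans)
  then have Lf: "L1norm \<Omega> f = ennreal L" unfolding L_def by simp
  have L0: "0 \<le> L" unfolding L_def by simp
  obtain d where d: "0 < d" "d / 2 * measure lborel \<Omega> \<le> \<eta>" using choose_d[OF \<eta>] by blast
  have bound: "0 \<le> (LINT x:\<Omega>|\<mu>. u x) \<and> (LINT x:\<Omega>|\<mu>. u x) \<le> c * (L + \<eta>) powr \<alpha>"
    if su: "smooth_on \<Omega> u" and pu: "\<And>x. 0 \<le> u x"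
      and L1u: "L1norm \<Omega> u \<le> ennreal l * (L1norm \<Omega> f + ennreal \<eta>)"
      and stu: "star_norm \<Omega> u \<le> L1norm \<Omega> u + ennreal (l * sqrt (enn2real (INF T\<in>admissible_T \<Omega> f. mass11 \<Omega> T)))"
    for u
  proof -
    have e1: "ennreal (l * sqrt (enn2real (INF T\<in>admissible_T \<Omega> f. mass11 \<Omega> T))) = ennreal l * S"
      unfolding S_def using l by (simp add: ennreal_mult')
    have b1: "L1norm \<Omega> u + ennreal l * S \<le> ennreal l * (L1norm \<Omega> f + ennreal \<eta>) + ennreal l * S"
      using L1u by (rule add_right_mono)
    have b0: "star_norm \<Omega> u \<le> L1norm \<Omega> u + ennreal l * S" using stu unfolding e1 .
    have "star_norm \<Omega> u \<le> ennreal l * (L1norm \<Omega> f + ennreal \<eta>) + ennreal l * S"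
      using order.trans[OF b0 b1] .
    also have "\<dots> = ennreal l * (star_norm \<Omega> f + ennreal \<eta>)" unfolding stf by (simp add: algebra_simps)
    also have "\<dots> \<le> ennreal l * (1 + ennreal \<eta>)" using st by (intro mult_left_mono add_right_mono) auto
    also have "\<dots> = ennreal (l * (1 + \<eta>))" using l \<eta> by (simp add: ennreal_mult' ennreal_plus)
    also have "l * (1 + \<eta>) = 1" unfolding l_def using \<eta> by simp
    finally have su1: "star_norm \<Omega> u \<le> 1" by simp
    have H: "\<bar>LINT x:\<Omega>|\<mu>'. u x\<bar> \<le> c * enn2real (L1norm \<Omega> u) powr \<alpha>" using Hol su su1 by blast
    have eq: "ennreal (l * (L + \<eta>)) = ennreal l * (ennreal L + ennreal \<eta>)"
      using l L0 \<eta> by (simp add: ennreal_mult' ennreal_plus)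
    have "enn2real (L1norm \<Omega> u) \<le> enn2real (ennreal (l * (L + \<eta>)))"
      using L1u unfolding Lf eq[symmetric] by (intro enn2real_mono) auto
    also have "\<dots> = l * (L + \<eta>)" using l L0 \<eta> by simp
    also have "\<dots> \<le> L + \<eta>" using l L0 \<eta> by (simp add: mult_left_le_one_le)
    finally have "enn2real (L1norm \<Omega> u) powr \<alpha> \<le> (L + \<eta>) powr \<alpha>"
      using c by (intro powr_mono2) auto
    then have H2: "\<bar>LINT x:\<Omega>|\<mu>'. u x\<bar> \<le> c * (L + \<eta>) powr \<alpha>"
    proof -
      have "c * enn2real (L1norm \<Omega> u) powr \<alpha> \<le> c * (L + \<eta>) powr \<alpha>"
        using c \<open>enn2real (L1norm \<Omega> u) powr \<alpha> \<le> (L + \<eta>) powr \<alpha>\<close> by (intro mult_left_mono) auto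
      then show ?thesis using H by linarith
    qed
    have uc: "continuous_on \<Omega> u" using su unfolding smooth_on_def by (metis Ck_on.simps(1))
    have i1: "integrable \<mu> (\<lambda>x. indicator \<Omega> x *\<^sub>R u x)" by (rule cs_integrable[OF s\<mu> f\<mu> c\<mu> \<Omega>(1) uc])
    have i2: "integrable \<mu>' (\<lambda>x. indicator \<Omega> x *\<^sub>R u x)" by (rule cs_integrable[OF s\<mu>' f\<mu>' c\<mu>' \<Omega>(1) uc])
    have "(LINT x:\<Omega>|\<mu>. u x) \<le> (LINT x:\<Omega>|\<mu>'. u x)"
      unfolding set_lebesgue_integral_def
      by (rule cmp_integral) (use s\<mu> s\<mu>' i1 i2 pu le in auto)
    moreover have "0 \<le> (LINT x:\<Omega>|\<mu>. u x)"
      unfolding set_lebesgue_integral_def using pu by simp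
    ultimately show ?thesis using H2 by simp
  qed
  define up where "up = (\<lambda>x. l * ((1 * f x + sqrt ((f x)\<^sup>2 + d\<^sup>2)) / 2))"
  define um where "um = (\<lambda>x. l * (((-1) * f x + sqrt ((f x)\<^sup>2 + d\<^sup>2)) / 2))"
  note P = decomp_one[OF \<Omega> sf d, of 1 l, OF _ l, folded up_def]
  note M = decomp_one[OF \<Omega> sf d, of "-1" l, OF _ l, folded um_def]
  have bp: "0 \<le> (LINT x:\<Omega>|\<mu>. up x) \<and> (LINT x:\<Omega>|\<mu>. up x) \<le> c * (L + \<eta>) powr \<alpha>"
    by (rule bound) (use P W in \<open>auto simp: up_def\<close>)
  have bm: "0 \<le> (LINT x:\<Omega>|\<mu>. um x) \<and> (LINT x:\<Omega>|\<mu>. um x) \<le> c * (L + \<eta>) powr \<alpha>"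
    by (rule bound) (use M W in \<open>auto simp: um_def\<close>)
  have upc: "continuous_on \<Omega> up" using P(1) unfolding smooth_on_def by (metis Ck_on.simps(1))
  have umc: "continuous_on \<Omega> um" using M(1) unfolding smooth_on_def by (metis Ck_on.simps(1))
  have i1: "integrable \<mu> (\<lambda>x. indicator \<Omega> x *\<^sub>R up x)" by (rule cs_integrable[OF s\<mu> f\<mu> c\<mu> \<Omega>(1) upc])
  have i2: "integrable \<mu> (\<lambda>x. indicator \<Omega> x *\<^sub>R um x)" by (rule cs_integrable[OF s\<mu> f\<mu> c\<mu> \<Omega>(1) umc])
  have fe: "(\<lambda>x. indicator \<Omega> x *\<^sub>R f x) = (\<lambda>x. (1 + \<eta>) * (indicator \<Omega> x *\<^sub>R up x - indicator \<Omega> x *\<^sub>R um x))"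
  proof
    fix x
    have d1: "up x - um x = l * f x" by (simp add: up_def um_def field_simps)
    have l1: "(1 + \<eta>) * l = 1" unfolding l_def using \<eta> by simp
    have "(1 + \<eta>) * (indicator \<Omega> x *\<^sub>R up x - indicator \<Omega> x *\<^sub>R um x)
        = indicator \<Omega> x * (((1 + \<eta>) * l) * f x)"
      using d1 by (simp add: algebra_simps flip: right_diff_distrib)
    then show "indicator \<Omega> x *\<^sub>R f x = (1 + \<eta>) * (indicator \<Omega> x *\<^sub>R up x - indicator \<Omega> x *\<^sub>R um x)"
      using l1 by simp
  qed
  have "(LINT x:\<Omega>|\<mu>. f x) = (1 + \<eta>) * ((LINT x:\<Omega>|\<mu>. up x) - (LINT x:\<Omega>|\<mu>. um x))"
    unfolding set_lebesgue_integral_def fe using i1 i2 by simp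
  moreover have "\<bar>(LINT x:\<Omega>|\<mu>. up x) - (LINT x:\<Omega>|\<mu>. um x)\<bar> \<le> c * (L + \<eta>) powr \<alpha> + c * (L + \<eta>) powr \<alpha>"
    using bp bm by linarith
  ultimately have "\<bar>LINT x:\<Omega>|\<mu>. f x\<bar> \<le> (1 + \<eta>) * (c * (L + \<eta>) powr \<alpha> + c * (L + \<eta>) powr \<alpha>)"
    using \<eta> by (simp add: abs_mult mult_left_mono)
  then show ?thesis unfolding L_def by (simp add: algebra_simps)
qed

lemma part2:
  fixes \<Omega> :: "(complex^'n) set"
  assumes \<Omega>: "open \<Omega>" "bounded \<Omega>"
    and s\<mu>: "sets \<mu> = sets borel" and s\<mu>': "sets \<mu>' = sets borel"
    and f\<mu>: "finite_measure \<mu>" and f\<mu>': "finite_measure \<mu>'"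
    and c\<mu>: "compact_support_in \<Omega> \<mu>" and c\<mu>': "compact_support_in \<Omega> \<mu>'"
    and le: "\<forall>A\<in>sets borel. emeasure \<mu> A \<le> emeasure \<mu>' A"
    and H: "Wstar_Holder \<Omega> \<mu>'"
  shows "Wstar_Holder \<Omega> \<mu>"
proof -
  obtain c \<alpha> where c: "c > 0" "\<alpha> > 0" and Hol: "\<forall>g. smooth_on \<Omega> g \<and> star_norm \<Omega> g \<le> 1 \<longrightarrow>
        \<bar>LINT x:\<Omega>|\<mu>'. g x\<bar> \<le> c * enn2real (L1norm \<Omega> g) powr \<alpha>"
    using H unfolding Wstar_Holder_def by blast
  note step = holder_step[OF \<Omega> s\<mu> s\<mu>' f\<mu> f\<mu>' c\<mu> c\<mu>' le c Hol]
  define C where "C = 4 * 2 powr \<alpha> * c"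
  have C: "C > 0" unfolding C_def using c by simp
  have "\<bar>LINT x:\<Omega>|\<mu>. f x\<bar> \<le> C * enn2real (L1norm \<Omega> f) powr \<alpha>"
    if sf: "smooth_on \<Omega> f" and st: "star_norm \<Omega> f \<le> 1" for f
  proof -
    define L where "L = enn2real (L1norm \<Omega> f)"
    have L0: "0 \<le> L" unfolding L_def by simp
    have S: "\<bar>LINT x:\<Omega>|\<mu>. f x\<bar> \<le> 2 * (1 + \<eta>) * c * (L + \<eta>) powr \<alpha>" if "0 < \<eta>" for \<eta>
      using step[OF sf st that] unfolding L_def .
    show ?thesis
    proof (cases "L > 0")
      case True
      define \<eta> where "\<eta> = min L 1"
      have \<eta>: "0 < \<eta>" "\<eta> \<le> 1" "\<eta> \<le> L" using True unfolding \<eta>_def by auto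
      have "(L + \<eta>) powr \<alpha> \<le> (2 * L) powr \<alpha>" using \<eta> L0 c by (intro powr_mono2) auto
      also have "\<dots> = 2 powr \<alpha> * L powr \<alpha>" using L0 by (simp add: powr_mult)
      finally have p: "(L + \<eta>) powr \<alpha> \<le> 2 powr \<alpha> * L powr \<alpha>" .
      have "2 * (1 + \<eta>) * c * (L + \<eta>) powr \<alpha> \<le> 2 * 2 * c * (2 powr \<alpha> * L powr \<alpha>)"
        using \<eta> c p by (intro mult_mono) auto
      also have "\<dots> = C * L powr \<alpha>" unfolding C_def by simp
      finally show ?thesis using S[OF \<eta>(1)] unfolding L_def by linarith
    next
      case False
      then have L00: "L = 0" using L0 by simp
      show ?thesis
      proof (rule ccontr)
        assume "\<not> ?thesis"
        then have r: "\<bar>LINT x:\<Omega>|\<mu>. f x\<bar> > 0" using L00 unfolding L_def by simp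
        define r where "r = \<bar>LINT x:\<Omega>|\<mu>. f x\<bar>"
        define \<eta> where "\<eta> = min 1 ((r / (8 * c)) powr (1 / \<alpha>))"
        have rp: "r > 0" using r unfolding r_def .
        have \<eta>: "0 < \<eta>" "\<eta> \<le> 1" unfolding \<eta>_def using rp c by auto
        have "\<eta> powr \<alpha> \<le> ((r / (8 * c)) powr (1 / \<alpha>)) powr \<alpha>"
          using \<eta> c unfolding \<eta>_def by (intro powr_mono2) auto
        also have "\<dots> = r / (8 * c)" using rp c by (simp add: powr_powr)
        finally have e: "\<eta> powr \<alpha> \<le> r / (8 * c)" .
        have "r \<le> 2 * (1 + \<eta>) * c * \<eta> powr \<alpha>" using S[OF \<eta>(1)] L00 unfolding r_def by simp
        also have "\<dots> \<le> 2 * 2 * c * (r / (8 * c))"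
          using \<eta> c e by (intro mult_mono) auto
        also have "\<dots> = r / 2" using c by simp
        finally show False using rp by simp
      qed
    qed
  qed
  then show ?thesis unfolding Wstar_Holder_def using C c by blast
qed

theorem lemma2p5:
  fixes \<Omega> :: "(complex^'n) set"
  assumes "open \<Omega>" and "connected \<Omega>" and "\<Omega> \<noteq> {}" and "bounded \<Omega>"
  shows "(\<forall>(f::complex^'n \<Rightarrow> real) (\<epsilon>::real). smooth_on \<Omega> f \<and> \<epsilon> > 0 \<longrightarrow>
            (\<exists>fp fm :: complex^'n \<Rightarrow> real.
               smooth_on \<Omega> fp \<and> smooth_on \<Omega> fm \<and>
               (\<forall>x\<in>\<Omega>. 0 \<le> fp x \<and> 0 \<le> fm x \<and> f x = fp x - fm x) \<and>
               L1norm \<Omega> fp \<le> L1norm \<Omega> f + ennreal \<epsilon> \<and>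
               L1norm \<Omega> fm \<le> L1norm \<Omega> f + ennreal \<epsilon> \<and>
               star_norm \<Omega> fp \<le> star_norm \<Omega> f + ennreal \<epsilon> \<and>
               star_norm \<Omega> fm \<le> star_norm \<Omega> f + ennreal \<epsilon>))
       \<and> (\<forall>\<mu> \<mu>' :: (complex^'n) measure.
            sets \<mu> = sets borel \<and> sets \<mu>' = sets borel \<and>
            finite_measure \<mu> \<and> finite_measure \<mu>' \<and>
            compact_support_in \<Omega> \<mu> \<and> compact_support_in \<Omega> \<mu>' \<and>
            (\<forall>A\<in>sets borel. emeasure \<mu> A \<le> emeasure \<mu>' A) \<and>
            Wstar_Holder \<Omega> \<mu>' \<longrightarrow> Wstar_Holder \<Omega> \<mu>)"
proof (intro conjI allI impI)
  fix f :: "complex^'n \<Rightarrow> real" and \<epsilon> :: real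
  assume "smooth_on \<Omega> f \<and> \<epsilon> > 0"
  then show "\<exists>fp fm :: complex^'n \<Rightarrow> real.
               smooth_on \<Omega> fp \<and> smooth_on \<Omega> fm \<and>
               (\<forall>x\<in>\<Omega>. 0 \<le> fp x \<and> 0 \<le> fm x \<and> f x = fp x - fm x) \<and>
               L1norm \<Omega> fp \<le> L1norm \<Omega> f + ennreal \<epsilon> \<and>
               L1norm \<Omega> fm \<le> L1norm \<Omega> f + ennreal \<epsilon> \<and>
               star_norm \<Omega> fp \<le> star_norm \<Omega> f + ennreal \<epsilon> \<and>
               star_norm \<Omega> fm \<le> star_norm \<Omega> f + ennreal \<epsilon>"
    using part1[OF assms(1) assms(4)] by blast
next
  fix \<mu> \<mu>' :: "(complex^'n) measure"
  assume h: "sets \<mu> = sets borel \<and> sets \<mu>' = sets borel \<and>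
            finite_measure \<mu> \<and> finite_measure \<mu>' \<and>
            compact_support_in \<Omega> \<mu> \<and> compact_support_in \<Omega> \<mu>' \<and>
            (\<forall>A\<in>sets borel. emeasure \<mu> A \<le> emeasure \<mu>' A) \<and>
            Wstar_Holder \<Omega> \<mu>'"
  show "Wstar_Holder \<Omega> \<mu>"
    using part2[OF assms(1) assms(4)] h by blast
qed

end
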